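(* Let $Q$ be a nonzero quadratic form on $\mathbb{F}_{q_1}/\mathbb{F}_q$ with rank $r_Q$, and let \[\mathcal{C}_Q'=\{(aQ(x)+\mathrm{Tr}_{q_2/q}(by)+c)_{(x,y)\in\mathbb{F}} : (a,b,c)\in\mathbb{F}_q\times\mathbb{F}_{q_2}\times\mathbb{F}_q\}.\] (1) If $r_Q$ is even, then $\mathcal{C}_Q'$ is a $[q^M,\,m_2+2]_q$ linear code with weight distribution: weight $0$ (frequency $1$); $q^M$ (frequency $q-1$); $q^{M-1}(q-1)$ (frequency $q^2(q^{m_2}-1)$); $q^{M-1}(q-1)(1-\epsilon q^{-r_Q/2})$ (frequency $q-1$); $q^{M-1}(q-1+\epsilon q^{-r_Q/2})$ (frequency $(q-1)^2$). Its complete weight enumerator is \[\sum_{i=0}^{q-1}\omega_i^{q^M}+q^2(q^{m_2}-1)\prod_{\rho=0}^{q-1}\omega_\rho^{q^{M-1}}+\sum_{i=0}^{q-1}(q-1)\,\omega_i^{t_1}\prod_{\rho=0,\rho\neq i}^{q-1}\omega_\rho^{t_2},\] where $t_1=q^{M-1}(1+\epsilon(q-1)q^{-r_Q/2})$ and $t_2=q^{M-1}(1-\epsilon q^{-r_Q/2})$. (2) If $r_Q$ is odd, then $\mathcal{C}_Q'$ is a $[q^M,\,m_2+2]_q$ linear code with weight distribution: weight $0$ (frequency $1$); $q^M$ (frequency $q-1$); $q^{M-1}(q-1)$ (frequency $q^2(q^{m_2}-1)+q-1$); $q^{M-1}(q-1-\epsilon q^{(1-r_Q)/2})$ (frequency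 $\frac12(q-1)^2$); $q^{M-1}(q-1+\epsilon q^{(1-r_Q)/2})$ (frequency $\frac12(q-1)^2$). Its complete weight enumerator is \[\sum_{i=0}^{q-1}\omega_i^{q^M}+q^2(q^{m_2}-1)\prod_{\rho=0}^{q-1}\omega_\rho^{q^{M-1}}+\sum_{i=0}^{q-1}\frac{q-1}{2}\,\omega_i^{q^{M-1}}\prod_{\rho=0,\rho\ne i}^{q-1}\omega_\rho^{k_1}+\sum_{i=0}^{q-1}\frac{q-1}{2}\,\omega_i^{q^{M-1}}\prod_{\rho=0,\rho\ne i}^{q-1}\omega_\rho^{k_2},\] where $k_1=q^{M-1}(1+\epsilon q^{(1-r_Q)/2}\eta(\omega_i-\omega_\rho))$ and $k_2=q^{M-1}(1-\epsilon q^{(1-r_Q)/2}\eta(\omega_i-\omega_\rho))$.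
   Context: Let $p$ be an odd prime, $m\ge1$, $q=p^m$. Let $m_1,m_2$ be positive integers, $M=m_1+m_2$, $q_i=q^{m_i}$, $\mathbb{F}=\mathbb{F}_{q_1}\times\mathbb{F}_{q_2}$; coordinates are indexed by $\mathbb{F}$ in a fixed order. $\mathrm{Tr}_{q^s/q}$ is the trace $\mathbb{F}_{q^s}\to\mathbb{F}_q$; $\eta$ is the quadratic character of $\mathbb{F}_q$ with $\eta(0)=0$. A quadratic form $Q$ on $\mathbb{F}_{q_1}/\mathbb{F}_q$ is a map $Q:\mathbb{F}_{q_1}\to\mathbb{F}_q$ with $Q(ax)=a^2Q(x)$ ($a\in\mathbb{F}_q$) such that $B_Q(x,y)=\frac12(Q(x+y)-Q(x)-Q(y))$ is $\mathbb{F}_q$-bilinear; its rank is $r_Q=m_1-\dim_{\mathbb{F}_q}\{x:B_Q(x,y)=0\ \forall y\}$. In suitable coordinates $Q=\sum_{i=1}^{r_Q}\lambda_ix_i^2$ with $\lambda_i\in\mathbb{F}_q^*$; $\varepsilon_Q=\eta(\lambda_1\cdots\lambda_{r_Q})$. Set $\epsilon=\varepsilon_Q(-1)^{(p-1)mr_Q/4}$ if $r_Q$ even, $\epsilon=\varepsilon_Q(-1)^{(p-1)m(r_Q+1)/4}$ if $r_Q$ odd. Complete weight enumerator: list $\mathbb{F}_q=\{\omega_0=0,\omega_1,\dots,\omega_{q-1}\}$; for $c\in\mathbb{F}_q^n$, $\omega[c]=\prod_j\omega_j^{k_j}$ (formal monomial), $k_j$ the number of coordinates of $c$ equal to $\omega_j$;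 the complete weight enumerator of $\mathcal{C}$ is $\sum_{c\in\mathcal{C}}\omega[c]$. *)

theory Defs
  imports Complex_Main "HOL-Library.Function_Algebras" "HOL-Library.Multiset" "HOL-Library.Cardinality" "HOL-Computational_Algebra.Primes"
begin

definition field_emb :: "('k::field \<Rightarrow> 'a::field) \<Rightarrow> bool" where
  "field_emb e \<longleftrightarrow> (\<forall>x y. e (x + y) = e x + e y) \<and> (\<forall>x y. e (x * y) = e x * e y) \<and> e 1 = 1"

text \<open>Trace Tr_{q^s/q}(y) = y + y^q + ... + y^(q^(s-1)), pulled back to the base field via e.\<close>
definition tr :: "('k::field \<Rightarrow> 'a::field) \<Rightarrow> nat \<Rightarrow> nat \<Rightarrow> 'a \<Rightarrow> 'k" where
  "tr e q s y = the_inv e (\<Sum>j<s. y ^ (q ^ j))"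

definition qchar :: "'k::field \<Rightarrow> int" where
  "qchar x = (if x = 0 then 0 else if (\<exists>y. y ^ 2 = x) then 1 else -1)"

definition bform :: "('a::field \<Rightarrow> 'k::field) \<Rightarrow> 'a \<Rightarrow> 'a \<Rightarrow> 'k" where
  "bform Q x y = (Q (x + y) - Q x - Q y) / 2"

definition quad_form :: "('k::field \<Rightarrow> 'a::field) \<Rightarrow> ('a \<Rightarrow> 'k) \<Rightarrow> bool" where
  "quad_form e Q \<longleftrightarrow>
     (\<forall>a x. Q (e a * x) = a ^ 2 * Q x) \<and>
     (\<forall>x x' y. bform Q (x + x') y = bform Q x y + bform Q x' y) \<and>
     (\<forall>a x y. bform Q (e a * x) y = a * bform Q x y) \<and>
     (\<forall>x y y'. bform Q x (y + y') = bform Q x y + bform Q x y') \<and>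
     (\<forall>a x y. bform Q x (e a * y) = a * bform Q x y)"

definition qf_rank :: "('k::field \<Rightarrow> 'a::field) \<Rightarrow> nat \<Rightarrow> ('a \<Rightarrow> 'k) \<Rightarrow> nat" where
  "qf_rank e m1 Q = m1 - vector_space.dim (\<lambda>a x. e a * x) {x. \<forall>y. bform Q x y = 0}"

text \<open>epsilon_Q = eta(lambda_1 ... lambda_r) where, in suitable coordinates (an F_q-basis
  v_0..v_{m1-1}), Q = sum_{i<r} lambda_i x_i^2.\<close>
definition qf_eps :: "('k::field \<Rightarrow> 'a::field) \<Rightarrow> nat \<Rightarrow> ('a \<Rightarrow> 'k) \<Rightarrow> int" where
  "qf_eps e m1 Q = (SOME \<epsilon>. \<exists>(v::nat \<Rightarrow> 'a) (lam::nat \<Rightarrow> 'k).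
      (\<forall>x::nat \<Rightarrow> 'k. (\<Sum>i<m1. e (x i) * v i) = 0 \<longrightarrow> (\<forall>i<m1. x i = 0)) \<and>
      (\<forall>i<qf_rank e m1 Q. lam i \<noteq> 0) \<and>
      (\<forall>x::nat \<Rightarrow> 'k. Q (\<Sum>i<m1. e (x i) * v i) = (\<Sum>i<qf_rank e m1 Q. lam i * (x i) ^ 2)) \<and>
      \<epsilon> = qchar (\<Prod>i<qf_rank e m1 Q. lam i))"

definition sgn_eps :: "nat \<Rightarrow> nat \<Rightarrow> ('k::field \<Rightarrow> 'a::field) \<Rightarrow> nat \<Rightarrow> ('a \<Rightarrow> 'k) \<Rightarrow> int" where
  "sgn_eps p m e m1 Q =
     (let r = qf_rank e m1 Q in
      if even r then qf_eps e m1 Q * (-1) ^ ((p - 1) * m * r div 4)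
      else qf_eps e m1 Q * (-1) ^ ((p - 1) * m * (r + 1) div 4))"

text \<open>The code C'_Q; codewords are vectors indexed by F = F_{q1} x F_{q2}.\<close>
definition codeQ :: "('k::field \<Rightarrow> 'b::field) \<Rightarrow> nat \<Rightarrow> nat \<Rightarrow> ('a \<Rightarrow> 'k) \<Rightarrow> ('a \<times> 'b \<Rightarrow> 'k) set" where
  "codeQ e2 q m2 Q = {(\<lambda>(x, y). a * Q x + tr e2 q m2 (b * y) + c) | a b c. True}"

definition hweight :: "('i \<Rightarrow> 'k::zero) \<Rightarrow> nat" where
  "hweight c = card {z. c z \<noteq> 0}"

text \<open>Complete weight enumerator: the multiset of monomials omega[c], each monomial being
  represented by its exponent vector (omega \<mapsto> number of coordinates equal to omega);
  the multiplicity of a monomial is its coefficient.\<close>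
definition cwe :: "('i \<Rightarrow> 'k) set \<Rightarrow> ('k \<Rightarrow> real) multiset" where
  "cwe C = image_mset (\<lambda>c w. real (card {z. c z = w})) (mset_set C)"

definition wdist :: "('i \<Rightarrow> 'k::zero) set \<Rightarrow> real multiset" where
  "wdist C = image_mset (\<lambda>c. real (hweight c)) (mset_set C)"

end

theory Submission
  imports Defs "HOL-Computational_Algebra.Polynomial" "HOL-Library.FuncSet"
begin



lemma (in vector_space) card_span_fin:
  assumes "finite (UNIV::'a set)" "finite B" "independent B"
  shows "card (span B) = CARD('a) ^ card B"
proof -
  let ?f = "\<lambda>u. \<Sum>v\<in>B. u v *s v"
  have sp: "span B = ?f ` (PiE B (\<lambda>_. UNIV))"
  proof
    show "span B \<subseteq> ?f ` (PiE B (\<lambda>_. UNIV))"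
    proof
      fix x assume "x \<in> span B"
      then obtain u where x: "x = ?f u" using span_finite[OF assms(2)] by auto
      have "restrict u B \<in> PiE B (\<lambda>_. UNIV)" by (auto simp: PiE_iff)
      moreover have "?f (restrict u B) = x" unfolding x by (rule sum.cong) simp_all
      ultimately show "x \<in> ?f ` (PiE B (\<lambda>_. UNIV))" by blast
    qed
  next
    show "?f ` (PiE B (\<lambda>_. UNIV)) \<subseteq> span B" using span_finite[OF assms(2)] by blast
  qed
  have inj: "inj_on ?f (PiE B (\<lambda>_. UNIV))"
  proof
    fix u w assume u: "u \<in> PiE B (\<lambda>_. UNIV)" and w: "w \<in> PiE B (\<lambda>_. UNIV)" and eq: "?f u = ?f w"
    have "(\<Sum>v\<in>B. (u v - w v) *s v) = 0"
      using eq by (simp add: scale_left_diff_distrib sum_subtractf)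
    have nd: "\<And>u. (\<Sum>v\<in>B. u v *s v) = 0 \<Longrightarrow> \<forall>v\<in>B. u v = 0"
      using assms(3) dependent_finite[OF assms(2)] by blast
    have "\<forall>v\<in>B. u v - w v = 0"
      by (rule nd) fact
    thus "u = w" using u w by (intro PiE_ext) auto
  qed
  have "card (span B) = card (PiE B (\<lambda>_. UNIV::'a set))" by (simp only: sp card_image[OF inj])
  also have "\<dots> = CARD('a) ^ card B" by (simp only: card_PiE[OF assms(2)] prod_constant)
  finally show ?thesis .
qed

lemma (in vector_space) dim_card_fin:
  assumes "finite (UNIV::'a set)" "subspace S" "finite S" "card S = CARD('a) ^ d" "CARD('a) > 1"
  shows "dim S = d"
proof -
  obtain B where B: "B \<subseteq> S" "independent B" "S \<subseteq> span B" "card B = dim S"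
    using basis_exists by blast
  have fB: "finite B" using B(1) assms(3) finite_subset by blast
  have "span B = S" using span_subspace B assms(2) by blast
  hence "card S = CARD('a) ^ card B" using card_span_fin[OF assms(1) fB B(2)] by simp
  hence "CARD('a) ^ card B = CARD('a) ^ d" using assms(4) by simp
  hence "card B = d" using assms(5) power_inject_exp by blast
  thus ?thesis using B(4) by simp
qed




lemma ff_pow_card: "(x::'k::{finite,field}) ^ CARD('k) = x"
proof (cases "x = 0")
  case False
  have "x * (\<Prod>y\<in>UNIV-{0}. x * y) = x * x ^ (CARD('k) - 1) * \<Prod>(UNIV-{0::'k})"
    by (simp add: prod.distrib mult_ac)
  also have "x * x ^ (CARD('k) - 1) = x ^ Suc (CARD('k) - 1)"
    by (subst power_Suc) auto
  also have "Suc (CARD('k) - 1) = CARD('k)"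
    using finite_UNIV_card_ge_0[where ?'a = 'k] by simp
  also have "(\<Prod>y\<in>UNIV-{0}. x * y) = (\<Prod>y\<in>UNIV-{0::'k}. y)"
    by (rule prod.reindex_bij_witness[of _ "\<lambda>y. y / x" "\<lambda>y. x * y"]) (use False in auto)
  finally show ?thesis
    by simp
qed (use finite_UNIV_card_ge_0[where ?'a = 'k] in auto)

lemma ff_pow_card_pow: "(x::'k::{finite,field}) ^ (CARD('k) ^ n) = x"
  by (induction n) (simp_all add: ff_pow_card power_mult)

lemma ff_pow_card1: "(x::'k::{finite,field}) \<noteq> 0 \<Longrightarrow> x ^ (CARD('k) - 1) = 1"
proof -
  assume "x \<noteq> 0"
  have "x * x ^ (CARD('k) - 1) = x ^ Suc (CARD('k) - 1)" by (simp only: power_Suc)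
  also have "Suc (CARD('k) - 1) = CARD('k)"
    using finite_UNIV_card_ge_0[where ?'a = 'k] by simp
  finally have "x * x ^ (CARD('k) - 1) = x * 1" using ff_pow_card by simp
  thus ?thesis using \<open>x \<noteq> 0\<close> by simp
qed

lemma ff_of_nat_card: "of_nat CARD('k) = (0::'k::{finite,field})"
proof -
  have "(\<Sum>x\<in>UNIV. x + 1) = (\<Sum>x\<in>(UNIV::'k set). x)"
    by (rule sum.reindex_bij_witness[of _ "\<lambda>y. y - 1" "\<lambda>y. y + 1"]) auto
  hence "(\<Sum>x\<in>(UNIV::'k set). x) + of_nat CARD('k) = (\<Sum>x\<in>(UNIV::'k set). x)"
    by (simp add: sum.distrib)
  thus ?thesis by simp
qed

lemma card_roots_le:
  fixes P :: "'k::field poly"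
  assumes "P \<noteq> 0"
  shows "card {x. poly P x = 0} \<le> degree P"
  using card_poly_roots_bound[OF assms] .

lemma card_pow_eq_le:
  assumes "n \<ge> 1"
  shows "card {x::'k::field. x ^ n = c} \<le> n"
proof -
  let ?P = "monom 1 n + [:-c:] :: 'k poly"
  have deg: "degree ?P = n" using assms by (subst degree_add_eq_left) (auto simp: degree_monom_eq)
  hence "?P \<noteq> 0" using assms by auto
  moreover have "{x. poly ?P x = 0} = {x. x ^ n = c}" by (auto simp: poly_monom)
  ultimately show ?thesis using card_roots_le[of ?P] deg by simp
qed




lemma qchar_cases: "qchar x \<in> {-1, 0, 1}"
  by (simp add: qchar_def)

lemma qchar_0[simp]: "qchar 0 = 0" by (simp add: qchar_def)
lemma qchar_1[simp]: "qchar 1 = 1" by (auto simp: qchar_def intro: exI[of _ 1])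
lemma qchar_sq: "y \<noteq> 0 \<Longrightarrow> qchar (y ^ 2) = 1" by (auto simp: qchar_def)
lemma qchar_nz: "x \<noteq> 0 \<Longrightarrow> qchar x = 1 \<or> qchar x = -1" by (simp add: qchar_def)

lemma sum_sq_group:
  fixes g :: "'k::{finite,field} \<Rightarrow> 'r::comm_ring_1"
  shows "(\<Sum>y\<in>UNIV. g (y ^ 2)) = (\<Sum>s\<in>UNIV. of_nat (card {y. y ^ 2 = s}) * g s)"
proof -
  have "(\<Sum>y\<in>UNIV. g (y ^ 2)) = (\<Sum>s\<in>UNIV. \<Sum>y\<in>{x. x \<in> UNIV \<and> x ^ 2 = s}. g (y ^ 2))"
    by (rule sum.group[symmetric]) auto
  also have "\<dots> = (\<Sum>s\<in>UNIV. of_nat (card {y. y ^ 2 = s}) * g s)"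
    by (intro sum.cong refl) simp
  finally show ?thesis .
qed

context
  fixes dummy :: "'k::{finite,field}"
  assumes two: "(2::'k) \<noteq> 0" and oddq: "odd CARD('k)"
begin

lemma sqfib: "int (card {y::'k. y ^ 2 = s}) = 1 + qchar s"
proof (cases "s = 0")
  case True
  hence "{y::'k. y ^ 2 = s} = {0}" by auto
  thus ?thesis using True by simp
next
  case False
  show ?thesis
  proof (cases "\<exists>y. y ^ 2 = s")
    case True
    then obtain y0 where y0: "y0 ^ 2 = s" by blast
    have y0nz: "y0 \<noteq> 0" using y0 False by auto
    have "{y::'k. y ^ 2 = s} = {y0, -y0}"
    proof
      show "{y0, -y0} \<subseteq> {y::'k. y ^ 2 = s}" using y0 by auto
      show "{y::'k. y ^ 2 = s} \<subseteq> {y0, -y0}"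
      proof
        fix y assume "y \<in> {y::'k. y ^ 2 = s}"
        hence "(y - y0) * (y + y0) = 0" using y0 by (simp add: power2_eq_square algebra_simps)
        hence "y = y0 \<or> y = - y0" by (auto simp: add_eq_0_iff2)
        thus "y \<in> {y0, -y0}" by auto
      qed
    qed
    moreover have "y0 \<noteq> - y0"
    proof
      assume "y0 = - y0" hence "2 * y0 = 0" by simp
      thus False using two y0nz by simp
    qed
    ultimately show ?thesis using False True by (simp add: qchar_def)
  next
    case F: False
    hence "{y::'k. y ^ 2 = s} = {}" by auto
    thus ?thesis using False F by (simp add: qchar_def)
  qed
qed

lemma sum_qchar: "(\<Sum>s\<in>(UNIV::'k set). qchar s) = 0"
proof -
  have "int CARD('k) = (\<Sum>y\<in>(UNIV::'k set). (\<lambda>_. 1::int) (y ^ 2))" by simp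
  also have "\<dots> = (\<Sum>s\<in>(UNIV::'k set). int (card {y. y ^ 2 = s}))"
    by (subst sum_sq_group) simp
  also have "\<dots> = (\<Sum>s\<in>(UNIV::'k set). 1 + qchar s)" by (simp add: sqfib)
  also have "\<dots> = int CARD('k) + (\<Sum>s\<in>(UNIV::'k set). qchar s)" by (simp add: sum.distrib)
  finally show ?thesis by simp
qed

lemma card_ge3: "CARD('k) \<ge> 3"
proof -
  have "(0::'k) \<noteq> 1" by simp
  hence "card {0::'k, 1} \<le> CARD('k)" by (intro card_mono) auto
  hence "CARD('k) \<ge> 2" by simp
  thus ?thesis using oddq by presburger
qed

lemma card_sq_nsq:
  "card {s::'k. qchar s = 1} = (CARD('k) - 1) div 2 \<and> card {s::'k. qchar s = -1} = (CARD('k) - 1) div 2"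
proof -
  let ?S = "{s::'k. qchar s = 1}" and ?N = "{s::'k. qchar s = -1}"
  have part: "(UNIV::'k set) = {0} \<union> ?S \<union> ?N" using qchar_nz by auto
  have d: "?S \<inter> ?N = {}" "{0} \<inter> (?S \<union> ?N) = {}" by auto
  have c1: "CARD('k) = 1 + card ?S + card ?N"
  proof -
    have "CARD('k) = card ({0} \<union> (?S \<union> ?N))" using part by (simp add: sup_assoc)
    also have "\<dots> = card {0::'k} + card (?S \<union> ?N)" using d by (intro card_Un_disjoint) auto
    also have "card (?S \<union> ?N) = card ?S + card ?N" using d by (intro card_Un_disjoint) auto
    finally show ?thesis by simp
  qed
  have "0 = (\<Sum>s\<in>(UNIV::'k set). qchar s)" using sum_qchar by simp
  also have "\<dots> = (\<Sum>s\<in>{0} \<union> (?S \<union> ?N). qchar s)" using part by (simp add: sup_assoc)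
  also have "\<dots> = qchar (0::'k) + ((\<Sum>s\<in>?S. qchar s) + (\<Sum>s\<in>?N. qchar s))"
    using d by (simp add: sum.union_disjoint)
  also have "\<dots> = int (card ?S) - int (card ?N)" by simp
  finally have "card ?S = card ?N" by simp
  thus ?thesis using c1 by simp
qed

definition hh :: nat where "hh = (CARD('k) - 1) div 2"

lemma two_hh: "2 * hh = CARD('k) - 1" using oddq unfolding hh_def by presburger

lemma euler:
  assumes "(x::'k) \<noteq> 0" shows "x ^ hh = of_int (qchar x)"
proof -
  let ?S = "{s::'k. qchar s = 1}" and ?R = "{x::'k. x ^ hh = 1}"
  have SR: "?S \<subseteq> ?R"
  proof
    fix s assume "s \<in> ?S"
    then obtain y where y: "y ^ 2 = s" "s \<noteq> 0" by (auto simp: qchar_def split: if_splits)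
    hence "y \<noteq> 0" by auto
    have "s ^ hh = y ^ (2 * hh)" using y by (simp add: power_mult)
    also have "\<dots> = 1" using two_hh ff_pow_card1[OF \<open>y \<noteq> 0\<close>] by simp
    finally show "s \<in> ?R" by simp
  qed
  have "hh \<ge> 1" using card_ge3 unfolding hh_def by simp
  hence "card ?R \<le> hh" by (rule card_pow_eq_le)
  hence SR': "?S = ?R" using SR card_sq_nsq unfolding hh_def
    by (metis card_seteq finite)
  show ?thesis
  proof (cases "qchar x = 1")
    case True thus ?thesis using SR' by auto
  next
    case False
    hence m: "qchar x = -1" using qchar_nz assms by auto
    have "x \<notin> ?S" using m by simp
    hence ne: "x ^ hh \<noteq> 1" using SR' by simp
    have "(x ^ hh) ^ 2 = 1" using two_hh ff_pow_card1[OF assms]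
      by (simp add: power_mult[symmetric] mult.commute)
    hence "(x ^ hh - 1) * (x ^ hh + 1) = 0" by (simp add: power2_eq_square algebra_simps)
    hence "x ^ hh = -1" using ne by (auto simp: add_eq_0_iff2)
    thus ?thesis using m by simp
  qed
qed

lemma of_int_pm1_inj:
  assumes "a \<in> {-1, 0, 1::int}" "b \<in> {-1, 0, 1}" "(of_int a :: 'k) = of_int b"
  shows "a = b"
proof -
  have "(2::'k) \<noteq> 0" "(1::'k) \<noteq> 0" "(-1::'k) \<noteq> 0" "(-2::'k) \<noteq> 0" using two by auto
  hence "(1::'k) \<noteq> -1" "(1::'k) \<noteq> 0" "(-1::'k) \<noteq> 0"
    by (auto simp: eq_neg_iff_add_eq_0)
  thus ?thesis using assms by auto
qed

lemma qchar_mult: "qchar ((x::'k) * y) = qchar x * qchar y"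
proof (cases "x = 0 \<or> y = 0")
  case True thus ?thesis by auto
next
  case False
  hence "(of_int (qchar (x * y)) :: 'k) = of_int (qchar x * qchar y)"
    using euler[of x] euler[of y] euler[of "x*y"] by (simp add: power_mult_distrib)
  moreover have "qchar x * qchar y \<in> {-1, 0, 1}" using qchar_cases[of x] qchar_cases[of y] by auto
  ultimately show ?thesis using of_int_pm1_inj qchar_cases[of "x*y"] by blast
qed

lemma qchar_minus1: "qchar (-1::'k) = (-1) ^ hh"
proof -
  have "(of_int (qchar (-1::'k)) :: 'k) = of_int ((-1) ^ hh)" using euler[of "-1"] by simp
  moreover have "((-1::int) ^ hh) \<in> {-1, 0, 1}" by (cases "even hh") auto
  ultimately show ?thesis using of_int_pm1_inj qchar_cases by blast
qed

lemma qchar_sq_nz: "(x::'k) \<noteq> 0 \<Longrightarrow> qchar x * qchar x = 1"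
  using qchar_nz[of x] by auto

lemma qchar_inverse: "qchar (inverse (x::'k)) = qchar x"
proof (cases "x = 0")
  case False
  have "qchar x * qchar (inverse x) = 1" using qchar_mult[of x "inverse x"] False by simp
  thus ?thesis using qchar_nz[of x] False by auto
qed simp

lemma jacobsthal:
  "(\<Sum>s\<in>(UNIV::'k set). qchar s * qchar (t - s)) =
     (if t = 0 then int (CARD('k) - 1) * qchar (-1::'k) else - qchar (-1::'k))"
proof (cases "t = 0")
  case True
  have "(\<Sum>s\<in>(UNIV::'k set). qchar s * qchar (t - s)) = (\<Sum>s\<in>UNIV - {0::'k}. qchar (-1::'k))"
  proof (rule sum.mono_neutral_cong_right)
    fix s :: 'k assume "s \<in> UNIV - {0}"
    hence "s \<noteq> 0" by simp
    have "qchar s * qchar (t - s) = qchar s * (qchar (-1::'k) * qchar s)"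
      using True qchar_mult[of "-1" s] by simp
    also have "\<dots> = qchar (-1::'k)" using qchar_sq_nz[OF \<open>s \<noteq> 0\<close>] by (simp add: algebra_simps)
    finally show "qchar s * qchar (t - s) = qchar (-1::'k)" .
  qed auto
  also have "\<dots> = int (CARD('k) - 1) * qchar (-1::'k)"
    by (simp add: card_Diff_singleton)
  finally show ?thesis using True by simp
next
  case False
  have "(\<Sum>s\<in>(UNIV::'k set). qchar s * qchar (t - s)) = (\<Sum>s\<in>UNIV - {0::'k}. qchar (t / s - 1))"
  proof (rule sum.mono_neutral_cong_right)
    fix s :: 'k assume "s \<in> UNIV - {0}"
    hence s: "s \<noteq> 0" by simp
    have "s * (t - s) = s ^ 2 * (t / s - 1)" using s by (simp add: field_simps power2_eq_square)
    hence "qchar s * qchar (t - s) = qchar (s ^ 2) * qchar (t / s - 1)"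
      by (metis qchar_mult)
    thus "qchar s * qchar (t - s) = qchar (t / s - 1)" using qchar_sq[OF s] by simp
  qed auto
  also have "\<dots> = (\<Sum>u\<in>UNIV - {0::'k}. qchar (u - 1))"
    by (rule sum.reindex_bij_witness[of _ "\<lambda>u. t / u" "\<lambda>s. t / s"]) (use False in auto)
  also have "\<dots> = (\<Sum>v\<in>UNIV - {-1::'k}. qchar v)"
    by (rule sum.reindex_bij_witness[of _ "\<lambda>v. v + 1" "\<lambda>u. u - 1"]) (auto simp: eq_neg_iff_add_eq_0)
  also have "\<dots> = (\<Sum>v\<in>(UNIV::'k set). qchar v) - qchar (-1::'k)"
    by (simp add: sum_diff1)
  also have "\<dots> = - qchar (-1::'k)" using sum_qchar by simp
  finally show ?thesis using False by simp
qed

lemma sum_sq_lambda: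
  fixes g :: "'k \<Rightarrow> real"
  assumes "lam \<noteq> 0"
  shows "(\<Sum>y\<in>UNIV. g (lam * y ^ 2)) = (\<Sum>s\<in>UNIV. g s * (1 + of_int (qchar (lam * s))))"
proof -
  have "(\<Sum>y\<in>UNIV. g (lam * y ^ 2)) = (\<Sum>s\<in>UNIV. of_nat (card {y::'k. y ^ 2 = s}) * g (lam * s))"
    by (rule sum_sq_group[of "\<lambda>s. g (lam * s)"])
  also have "\<dots> = (\<Sum>s\<in>UNIV. (1 + of_int (qchar s)) * g (lam * s))"
  proof (intro sum.cong refl)
    fix s :: 'k
    have "real (card {y::'k. y ^ 2 = s}) = real_of_int (int (card {y::'k. y ^ 2 = s}))" by simp
    also have "\<dots> = 1 + of_int (qchar s)" by (simp only: sqfib)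
    finally show "of_nat (card {y::'k. y ^ 2 = s}) * g (lam * s) = (1 + of_int (qchar s)) * g (lam * s)"
      by simp
  qed
  also have "\<dots> = (\<Sum>u\<in>UNIV. g u * (1 + of_int (qchar (lam * u))))"
  proof (rule sum.reindex_bij_witness[of _ "\<lambda>u. u / lam" "\<lambda>s. lam * s"])
    fix a :: 'k
    have "qchar (lam * (lam * a)) = qchar lam * qchar lam * qchar a" by (simp add: qchar_mult)
    also have "\<dots> = qchar a" using qchar_sq_nz[OF assms] by simp
    finally show "g (lam * a) * (1 + real_of_int (qchar (lam * (lam * a)))) = (1 + real_of_int (qchar a)) * g (lam * a)"
      by simp
  qed (use assms in auto)
  finally show ?thesis .
qed

end




definition cnt :: "(nat \<Rightarrow> 'k::{finite,field}) \<Rightarrow> nat \<Rightarrow> 'k \<Rightarrow> nat" where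
  "cnt lam n t = card {x \<in> PiE {..<n} (\<lambda>_. UNIV). (\<Sum>i<n. lam i * x i ^ 2) = t}"

lemma cnt_0: "cnt lam 0 t = (if t = 0 then 1 else 0)"
  by (auto simp: cnt_def)

lemma cnt_Suc: "cnt lam (Suc n) t = (\<Sum>y\<in>UNIV. cnt lam n (t - lam n * y ^ 2))"
proof -
  let ?S = "{x \<in> PiE {..<Suc n} (\<lambda>_. UNIV). (\<Sum>i<Suc n. lam i * x i ^ 2) = t}"
  have fin: "finite ?S" by (rule finite_subset[of _ "PiE {..<Suc n} (\<lambda>_. UNIV)"]) (auto intro: finite_PiE)
  have "cnt lam (Suc n) t = (\<Sum>x\<in>?S. 1)" by (simp add: cnt_def)
  also have "\<dots> = (\<Sum>y\<in>UNIV. \<Sum>x\<in>{x. x \<in> ?S \<and> x n = y}. 1)"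
    by (rule sum.group[symmetric]) (use fin in auto)
  also have "\<dots> = (\<Sum>y\<in>UNIV. cnt lam n (t - lam n * y ^ 2))"
  proof (intro sum.cong refl)
    fix y
    let ?T = "{g \<in> PiE {..<n} (\<lambda>_. UNIV). (\<Sum>i<n. lam i * g i ^ 2) = t - lam n * y ^ 2}"
    have "bij_betw (\<lambda>x. restrict x {..<n}) {x. x \<in> ?S \<and> x n = y} ?T"
    proof (rule bij_betw_byWitness[where f' = "\<lambda>g. g(n := y)"])
      show "\<forall>a\<in>{x. x \<in> ?S \<and> x n = y}. (restrict a {..<n})(n := y) = a"
      proof
        fix a assume a: "a \<in> {x. x \<in> ?S \<and> x n = y}"
        show "(restrict a {..<n})(n := y) = a"
        proof
          fix i show "((restrict a {..<n})(n := y)) i = a i"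
            using a by (cases "i < n"; cases "i = n") (auto simp: PiE_iff extensional_def)
        qed
      qed
      show "\<forall>a'\<in>?T. restrict (a'(n := y)) {..<n} = a'"
      proof
        fix g assume g: "g \<in> ?T"
        show "restrict (g(n := y)) {..<n} = g"
        proof
          fix i show "restrict (g(n := y)) {..<n} i = g i"
            using g by (cases "i < n") (auto simp: PiE_iff extensional_def)
        qed
      qed
      show "(\<lambda>x. restrict x {..<n}) ` {x. x \<in> ?S \<and> x n = y} \<subseteq> ?T"
      proof
        fix g assume "g \<in> (\<lambda>x. restrict x {..<n}) ` {x. x \<in> ?S \<and> x n = y}"
        then obtain x where x: "x \<in> ?S" "x n = y" "g = restrict x {..<n}" by blast
        have "(\<Sum>i<n. lam i * g i ^ 2) = (\<Sum>i<n. lam i * x i ^ 2)" using x(3) by simp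
        also have "\<dots> = t - lam n * y ^ 2" using x(1,2) by (simp add: eq_diff_eq)
        finally show "g \<in> ?T" using x(3) by auto
      qed
      show "(\<lambda>g. g(n := y)) ` ?T \<subseteq> {x. x \<in> ?S \<and> x n = y}"
      proof
        fix x assume "x \<in> (\<lambda>g. g(n := y)) ` ?T"
        then obtain g where g: "g \<in> ?T" "x = g(n := y)" by blast
        have "(\<Sum>i<Suc n. lam i * x i ^ 2) = (\<Sum>i<n. lam i * g i ^ 2) + lam n * y ^ 2"
          using g(2) by simp
        also have "\<dots> = t" using g(1) by simp
        finally show "x \<in> {x. x \<in> ?S \<and> x n = y}" using g by (auto simp: PiE_iff extensional_def)
      qed
    qed
    hence "card {x. x \<in> ?S \<and> x n = y} = card ?T" by (rule bij_betw_same_card)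
    thus "(\<Sum>x\<in>{x. x \<in> ?S \<and> x n = y}. 1) = cnt lam n (t - lam n * y ^ 2)"
      by (simp add: cnt_def)
  qed
  finally show ?thesis .
qed

lemma cnt_zeros:
  assumes "r \<le> n" "\<forall>i. r \<le> i \<and> i < n \<longrightarrow> lam i = 0"
  shows "cnt lam n t = CARD('k) ^ (n - r) * cnt (lam::nat \<Rightarrow> 'k::{finite,field}) r t"
  using assms
proof (induction n)
  case 0 thus ?case by simp
next
  case (Suc n)
  show ?case
  proof (cases "r = Suc n")
    case True thus ?thesis by simp
  next
    case False
    hence "r \<le> n" using Suc.prems by simp
    have "lam n = 0" using Suc.prems \<open>r \<le> n\<close> by simp
    hence "cnt lam (Suc n) t = CARD('k) * cnt lam n t" by (simp add: cnt_Suc)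
    also have "\<dots> = CARD('k) ^ (Suc n - r) * cnt lam r t"
      using Suc.IH[OF \<open>r \<le> n\<close>] Suc.prems \<open>r \<le> n\<close> by (simp add: Suc_diff_le)
    finally show ?thesis .
  qed
qed

context
  fixes dummy :: "'k::{finite,field}"
  assumes two: "(2::'k) \<noteq> 0" and oddq: "odd CARD('k)"
begin

definition evenF :: "(nat \<Rightarrow> 'k) \<Rightarrow> nat \<Rightarrow> bool" where
  "evenF lam k \<longleftrightarrow> (\<forall>t. real CARD('k) * real (cnt lam (2*k) t) =
      real CARD('k) ^ (2*k) + of_int (qchar ((-1) ^ k * (\<Prod>i<2*k. lam i))) * real CARD('k) ^ k *
        (if t = 0 then real CARD('k) - 1 else -1))"

definition oddF :: "(nat \<Rightarrow> 'k) \<Rightarrow> nat \<Rightarrow> bool" where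
  "oddF lam k \<longleftrightarrow> (\<forall>t. real (cnt lam (2*k+1) t) =
      real CARD('k) ^ (2*k) + of_int (qchar ((-1) ^ k * (\<Prod>i<2*k+1. lam i))) * real CARD('k) ^ k *
        of_int (qchar t))"

lemma sum_qchar_lam: "(\<Sum>s\<in>(UNIV::'k set). real_of_int (qchar (lam * s))) = 0"
proof -
  have "(\<Sum>s\<in>(UNIV::'k set). real_of_int (qchar (lam * s))) =
        real_of_int (qchar lam) * real_of_int (\<Sum>s\<in>(UNIV::'k set). qchar s)"
    by (simp add: qchar_mult[OF two oddq] sum_distrib_left)
  thus ?thesis using sum_qchar[OF two oddq] by simp
qed

lemma evenF_0: "evenF lam 0"
  unfolding evenF_def by (simp add: cnt_0)

lemma even_to_odd:
  assumes "evenF lam k" "lam (2*k) \<noteq> 0"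
  shows "oddF lam k"
  unfolding oddF_def
proof
  fix t
  let ?q = "real CARD('k)" and ?l = "lam (2*k)"
  let ?E = "real_of_int (qchar ((-1) ^ k * (\<Prod>i<2*k. lam i)))"
  have ev: "?q * real (cnt lam (2*k) u) = (?q ^ (2*k) - ?E * ?q ^ k) + ?E * ?q ^ k * (if u = 0 then ?q else 0)" for u
    using assms(1) unfolding evenF_def by (simp add: algebra_simps)
  have "real (cnt lam (2*k+1) t) = (\<Sum>y\<in>UNIV. real (cnt lam (2*k) (t - ?l * y ^ 2)))"
    by (simp add: cnt_Suc)
  also have "\<dots> = (\<Sum>s\<in>UNIV. real (cnt lam (2*k) (t - s)) * (1 + of_int (qchar (?l * s))))"
    by (rule sum_sq_lambda[OF two oddq assms(2), of "\<lambda>u. real (cnt lam (2*k) (t - u))"])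
  finally have "?q * real (cnt lam (2*k+1) t) =
      (\<Sum>s\<in>UNIV. (?q * real (cnt lam (2*k) (t - s))) * (1 + of_int (qchar (?l * s))))"
    by (simp add: sum_distrib_left mult.assoc)
  also have "\<dots> = (\<Sum>s\<in>UNIV. (?q ^ (2*k) - ?E * ?q ^ k) * (1 + of_int (qchar (?l * s)))
                   + ?E * ?q ^ k * ((if s = t then ?q else 0) * (1 + of_int (qchar (?l * s)))))"
  proof (intro sum.cong refl)
    fix s show "?q * real (cnt lam (2 * k) (t - s)) * (1 + real_of_int (qchar (lam (2 * k) * s))) =
         (?q ^ (2 * k) - ?E * ?q ^ k) * (1 + real_of_int (qchar (lam (2 * k) * s))) +
         ?E * ?q ^ k * ((if s = t then ?q else 0) * (1 + real_of_int (qchar (lam (2 * k) * s))))"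
      unfolding ev[of "t - s"] by (simp add: algebra_simps)
  qed
  also have "\<dots> = (?q ^ (2*k) - ?E * ?q ^ k) * (\<Sum>s\<in>UNIV. (1 + of_int (qchar (?l * s))))
                   + ?E * ?q ^ k * (\<Sum>s\<in>UNIV. (if s = t then ?q else 0) * (1 + of_int (qchar (?l * s))))"
    by (simp only: sum.distrib of_int_sum flip: sum_distrib_left)
  also have "(\<Sum>s\<in>(UNIV::'k set). (1 + real_of_int (qchar (?l * s)))) = ?q"
    by (simp add: sum.distrib sum_qchar_lam)
  also have "(\<Sum>s\<in>(UNIV::'k set). (if s = t then ?q else 0) * (1 + real_of_int (qchar (?l * s)))) =
             ?q * (1 + of_int (qchar (?l * t)))"
  proof -
    have "(\<Sum>s\<in>(UNIV::'k set). (if s = t then ?q else 0) * (1 + real_of_int (qchar (?l * s)))) =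
          (\<Sum>s\<in>(UNIV::'k set). (if s = t then ?q * (1 + real_of_int (qchar (?l * t))) else 0))"
      by (intro sum.cong) auto
    thus ?thesis by simp
  qed
  finally have "?q * real (cnt lam (2*k+1) t) = ?q * (?q ^ (2*k) + ?E * of_int (qchar ?l) * ?q ^ k * of_int (qchar t))"
    by (simp add: qchar_mult[OF two oddq] algebra_simps)
  hence "real (cnt lam (2*k+1) t) = ?q ^ (2*k) + ?E * of_int (qchar ?l) * ?q ^ k * of_int (qchar t)"
    by simp
  moreover have "?E * of_int (qchar ?l) = of_int (qchar ((-1) ^ k * (\<Prod>i<2*k+1. lam i)))"
    by (simp add: qchar_mult[OF two oddq] mult.assoc)
  ultimately show "real (cnt lam (2*k+1) t) = ?q ^ (2*k) + of_int (qchar ((-1) ^ k * (\<Prod>i<2*k+1. lam i))) * ?q ^ k * of_int (qchar t)"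
    by simp
qed

lemma odd_to_even:
  assumes "oddF lam k" "lam (2*k+1) \<noteq> 0"
  shows "evenF lam (Suc k)"
  unfolding evenF_def
proof
  fix t
  let ?q = "real CARD('k)" and ?l = "lam (2*k+1)"
  let ?F = "real_of_int (qchar ((-1) ^ k * (\<Prod>i<2*k+1. lam i)))"
  have od: "real (cnt lam (2*k+1) u) = ?q ^ (2*k) + ?F * ?q ^ k * of_int (qchar u)" for u
    using assms(1) unfolding oddF_def by simp
  have "real (cnt lam (2*Suc k) t) = (\<Sum>y\<in>UNIV. real (cnt lam (2*k+1) (t - ?l * y ^ 2)))"
    by (simp add: cnt_Suc)
  also have "\<dots> = (\<Sum>s\<in>UNIV. real (cnt lam (2*k+1) (t - s)) * (1 + of_int (qchar (?l * s))))"
    by (rule sum_sq_lambda[OF two oddq assms(2), of "\<lambda>u. real (cnt lam (2*k+1) (t - u))"])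
  also have "\<dots> = (\<Sum>s\<in>UNIV. ?q ^ (2*k) * (1 + of_int (qchar (?l * s)))
          + ?F * ?q ^ k * of_int (qchar (t - s))
          + ?F * ?q ^ k * of_int (qchar ?l) * of_int (qchar s * qchar (t - s)))"
  proof (intro sum.cong refl)
    fix s show "real (cnt lam (2 * k + 1) (t - s)) * (1 + real_of_int (qchar (lam (2 * k + 1) * s))) =
         ?q ^ (2 * k) * (1 + real_of_int (qchar (lam (2 * k + 1) * s))) +
         ?F * ?q ^ k * real_of_int (qchar (t - s)) +
         ?F * ?q ^ k * real_of_int (qchar (lam (2 * k + 1))) * real_of_int (qchar s * qchar (t - s))"
      unfolding od[of "t - s"] by (simp add: qchar_mult[OF two oddq] algebra_simps)
  qed
  also have "\<dots> = ?q ^ (2*k) * (\<Sum>s\<in>UNIV. (1 + of_int (qchar (?l * s))))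
          + ?F * ?q ^ k * (\<Sum>s\<in>UNIV. of_int (qchar (t - s)))
          + ?F * ?q ^ k * of_int (qchar ?l) * of_int (\<Sum>s\<in>UNIV. qchar s * qchar (t - s))"
    by (simp only: sum.distrib of_int_sum flip: sum_distrib_left)
  also have "(\<Sum>s\<in>(UNIV::'k set). (1 + real_of_int (qchar (?l * s)))) = ?q"
    by (simp add: sum.distrib sum_qchar_lam)
  also have "(\<Sum>s\<in>(UNIV::'k set). real_of_int (qchar (t - s))) = 0"
  proof -
    have "(\<Sum>s\<in>(UNIV::'k set). real_of_int (qchar (t - s))) = (\<Sum>s\<in>(UNIV::'k set). real_of_int (qchar s))"
      by (rule sum.reindex_bij_witness[of _ "\<lambda>s. t - s" "\<lambda>s. t - s"]) auto
    also have "\<dots> = of_int (\<Sum>s\<in>(UNIV::'k set). qchar s)" by simp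
    finally show ?thesis using sum_qchar[OF two oddq] by simp
  qed
  also have "(\<Sum>s\<in>(UNIV::'k set). qchar s * qchar (t - s)) =
     (if t = 0 then int (CARD('k) - 1) * qchar (-1::'k) else - qchar (-1::'k))"
    by (rule jacobsthal[OF two oddq])
  finally have eq: "real (cnt lam (2*Suc k) t) = ?q ^ (2*k) * ?q + ?F * ?q ^ k * of_int (qchar ?l) *
      of_int (if t = 0 then int (CARD('k) - 1) * qchar (-1::'k) else - qchar (-1::'k))" by simp
  have sg: "?F * of_int (qchar ?l) * of_int (qchar (-1::'k)) = of_int (qchar ((-1) ^ Suc k * (\<Prod>i<2*Suc k. lam i)))"
  proof -
    have "(-1::'k) ^ Suc k * (\<Prod>i<2*Suc k. lam i) = (-1) * (((-1) ^ k * (\<Prod>i<2*k+1. lam i)) * ?l)"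
      by (simp add: algebra_simps)
    thus ?thesis by (simp only: qchar_mult[OF two oddq] of_int_mult) (simp add: algebra_simps)
  qed
  have c1: "real (CARD('k) - 1) = ?q - 1" using card_ge3[OF two oddq] by simp
  show "?q * real (cnt lam (2 * Suc k) t) = ?q ^ (2 * Suc k) +
       of_int (qchar ((-1) ^ Suc k * (\<Prod>i<2 * Suc k. lam i))) * ?q ^ Suc k * (if t = 0 then ?q - 1 else - 1)"
    unfolding eq sg[symmetric] using c1 by (cases "t = 0") (simp_all add: algebra_simps power_add power_mult_distrib power2_eq_square)
qed

lemma diag_formulas:
  assumes "\<forall>i<r. lam i \<noteq> 0"
  shows "(even r \<longrightarrow> evenF lam (r div 2)) \<and> (odd r \<longrightarrow> oddF lam (r div 2))"
proof -
  have "\<forall>k. 2*k + 1 \<le> r \<longrightarrow> evenF lam k \<and> oddF lam k"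
  proof
    fix k show "2*k + 1 \<le> r \<longrightarrow> evenF lam k \<and> oddF lam k"
    proof (induction k)
      case 0 thus ?case using evenF_0 even_to_odd assms by auto
    next
      case (Suc k)
      show ?case
      proof
        assume "2 * Suc k + 1 \<le> r"
        hence ev: "evenF lam (Suc k)" using Suc.IH odd_to_even assms by auto
        thus "evenF lam (Suc k) \<and> oddF lam (Suc k)"
          using even_to_odd[of lam "Suc k"] assms \<open>2 * Suc k + 1 \<le> r\<close> by auto
      qed
    qed
  qed
  note claim = this
  show ?thesis
  proof (intro conjI impI)
    assume "even r"
    then obtain k where k: "r = 2 * k" by (rule evenE)
    show "evenF lam (r div 2)"
    proof (cases k)
      case 0 thus ?thesis using k evenF_0 by simp
    next
      case (Suc j)
      hence "oddF lam j" using claim k by auto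
      hence "evenF lam (Suc j)" using odd_to_even assms k Suc by auto
      thus ?thesis using k Suc by simp
    qed
  next
    assume "odd r"
    then obtain k where k: "r = 2 * k + 1" by (rule oddE)
    thus "oddF lam (r div 2)" using claim by simp
  qed
qed

end




section \<open>Field embeddings\<close>

context
  fixes e :: "'k::field \<Rightarrow> 'a::field"
  assumes emb: "field_emb e"
begin

lemma e_add: "e (x + y) = e x + e y" using emb by (simp add: field_emb_def)
lemma e_mult: "e (x * y) = e x * e y" using emb by (simp add: field_emb_def)
lemma e_one: "e 1 = 1" using emb by (simp add: field_emb_def)
lemma e_zero: "e 0 = 0"
proof -
  have "e 0 + e 0 = e 0 + 0" using e_add[of 0 0] by simp
  thus ?thesis by (rule add_left_imp_eq)
qed
lemma e_minus: "e (- x) = - e x"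
proof -
  have "e x + e (- x) = 0" using e_add[of x "-x"] e_zero by simp
  hence "- e x = e (- x)" by (rule minus_unique)
  thus ?thesis by simp
qed
lemma e_diff: "e (x - y) = e x - e y" using e_add[of x "-y"] e_minus[of y] by simp
lemma e_eq0: "e x = 0 \<longleftrightarrow> x = 0"
proof
  assume "e x = 0"
  show "x = 0"
  proof (rule ccontr)
    assume "x \<noteq> 0"
    hence "e x * e (inverse x) = 1" using e_mult[of x "inverse x"] e_one by simp
    thus False using \<open>e x = 0\<close> by simp
  qed
qed (simp add: e_zero)
lemma e_inj: "inj e"
proof (rule injI)
  fix x y assume "e x = e y"
  hence "e (x - y) = 0" by (simp add: e_diff)
  thus "x = y" using e_eq0 by simp
qed
lemma e_sum: "e (sum f A) = (\<Sum>i\<in>A. e (f i))"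
  by (induction A rule: infinite_finite_induct) (auto simp: e_zero e_add)
lemma e_pow: "e (x ^ n) = e x ^ n"
  by (induction n) (auto simp: e_one e_mult)
lemma e_of_nat: "e (of_nat n) = of_nat n"
  by (induction n) (auto simp: e_zero e_one e_add)

lemma vs_e: "vector_space (\<lambda>a (x::'a). e a * x)"
  by unfold_locales (auto simp: e_add e_mult e_one algebra_simps)

end

section \<open>Quadratic forms\<close>

context
  fixes e :: "'k::{finite,field} \<Rightarrow> 'a::{finite,field}" and Q :: "'a \<Rightarrow> 'k"
  assumes emb: "field_emb e" and qf: "quad_form e Q" and two: "(2::'k) \<noteq> 0"
begin

abbreviation B where "B \<equiv> bform Q"

lemma Q_scale: "Q (e a * x) = a ^ 2 * Q x" using qf by (simp add: quad_form_def)
lemma B_addL: "B (x + x') y = B x y + B x' y" using qf by (simp add: quad_form_def)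
lemma B_scaleL: "B (e a * x) y = a * B x y" using qf by (simp add: quad_form_def)
lemma B_sym: "B x y = B y x" by (simp add: bform_def add.commute algebra_simps)
lemma B_addR: "B x (y + y') = B x y + B x y'" using B_addL B_sym by metis
lemma B_scaleR: "B x (e a * y) = a * B x y" using B_scaleL B_sym by metis
lemma Q_0: "Q 0 = 0" using Q_scale[of 0 0] e_zero[OF emb] by simp
lemma B_0L: "B 0 y = 0" using B_scaleL[of 0 0 y] e_zero[OF emb] by simp
lemma B_0R: "B y 0 = 0" using B_0L B_sym by metis
lemma Q_add: "Q (x + y) = Q x + Q y + 2 * B x y"
proof -
  have "2 * B x y = Q (x + y) - Q x - Q y" unfolding bform_def using two by simp
  thus ?thesis by (simp add: algebra_simps)
qed
lemma B_diag: "B x x = Q x"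
proof -
  have e2: "e 2 = 2" using e_add[OF emb, of 1 1] e_one[OF emb] by simp
  have "x + x = e 2 * x" by (subst e2) (rule mult_2[symmetric])
  hence q2: "Q (x + x) = 2^2 * Q x" using Q_scale[of 2 x] by (simp only:)
  have "2 * B x x = 2 * Q x" using Q_add[of x x] q2 by algebra
  thus ?thesis using two by simp
qed
lemma B_sumL: "B (\<Sum>i\<in>A. e (c i) * v i) y = (\<Sum>i\<in>A. c i * B (v i) y)"
  by (induction A rule: infinite_finite_induct) (auto simp: B_0L B_addL B_scaleL)
lemma B_sumR: "B y (\<Sum>i\<in>A. e (c i) * v i) = (\<Sum>i\<in>A. c i * B y (v i))"
proof -
  have "B y (\<Sum>i\<in>A. e (c i) * v i) = B (\<Sum>i\<in>A. e (c i) * v i) y" by (rule B_sym)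
  also have "\<dots> = (\<Sum>i\<in>A. c i * B (v i) y)" by (rule B_sumL)
  also have "\<dots> = (\<Sum>i\<in>A. c i * B y (v i))"
  proof (rule sum.cong[OF refl])
    fix i show "c i * B (v i) y = c i * B y (v i)" by (subst B_sym) (rule refl)
  qed
  finally show ?thesis .
qed

definition indep :: "(nat \<Rightarrow> 'a) \<Rightarrow> nat \<Rightarrow> bool" where
  "indep v n \<longleftrightarrow> (\<forall>x::nat \<Rightarrow> 'k. (\<Sum>i<n. e (x i) * v i) = 0 \<longrightarrow> (\<forall>i<n. x i = 0))"

lemma indepD: "indep v n \<Longrightarrow> (\<Sum>i<n. e (x i) * v i) = 0 \<Longrightarrow> i < n \<Longrightarrow> x i = 0"
  unfolding indep_def by blast

definition spanset :: "(nat \<Rightarrow> 'a) \<Rightarrow> nat \<Rightarrow> 'a set" where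
  "spanset v n = (\<lambda>c. \<Sum>i<n. e (c i) * v i) ` UNIV"

lemma comb_diff: "(\<Sum>i<n. e (c i) * v i) - (\<Sum>i<n. e (d i) * v i) = (\<Sum>i<n. e (c i - d i) * v i)"
  by (simp add: e_diff[OF emb] sum_subtractf algebra_simps)

lemma comb_add: "(\<Sum>i<n. e (c i) * v i) + (\<Sum>i<n. e (d i) * v i) = (\<Sum>i<n. e (c i + d i) * v i)"
  by (simp add: e_add[OF emb] sum.distrib algebra_simps)

lemma indep_inj:
  assumes "indep v n"
  shows "inj_on (\<lambda>c. \<Sum>i<n. e (c i) * v i) (PiE {..<n} (\<lambda>_. UNIV))"
proof
  fix c d assume c: "c \<in> PiE {..<n} (\<lambda>_. UNIV)" and d: "d \<in> PiE {..<n} (\<lambda>_. UNIV)"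
    and eq: "(\<Sum>i<n. e (c i) * v i) = (\<Sum>i<n. e (d i) * v i)"
  have "(\<Sum>i<n. e (c i - d i) * v i) = 0" using eq comb_diff[of c v n d] by simp
  hence "\<forall>i<n. c i - d i = 0" using indepD[OF assms, of "\<lambda>i. c i - d i"] by blast
  thus "c = d" using c d by (intro PiE_ext) auto
qed

lemma spanset_PiE: "spanset v n = (\<lambda>c. \<Sum>i<n. e (c i) * v i) ` (PiE {..<n} (\<lambda>_. UNIV))"
proof
  show "spanset v n \<subseteq> (\<lambda>c. \<Sum>i<n. e (c i) * v i) ` (PiE {..<n} (\<lambda>_. UNIV))"
  proof
    fix x assume "x \<in> spanset v n"
    then obtain c where x: "x = (\<Sum>i<n. e (c i) * v i)" by (auto simp: spanset_def)
    have "restrict c {..<n} \<in> PiE {..<n} (\<lambda>_. UNIV)" by (auto simp: PiE_iff)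
    moreover have "x = (\<Sum>i<n. e (restrict c {..<n} i) * v i)" unfolding x by (rule sum.cong) simp_all
    ultimately show "x \<in> (\<lambda>c. \<Sum>i<n. e (c i) * v i) ` (PiE {..<n} (\<lambda>_. UNIV))" by blast
  qed
qed (auto simp: spanset_def)

lemma card_spanset: "indep v n \<Longrightarrow> card (spanset v n) = CARD('k) ^ n"
  by (simp only: spanset_PiE card_image[OF indep_inj] card_PiE finite_lessThan prod_constant card_lessThan)

lemma indep_le:
  assumes "indep v n" "CARD('a) = CARD('k) ^ m1"
  shows "n \<le> m1"
proof -
  have "card (spanset v n) \<le> CARD('a)" by (rule card_mono) auto
  hence "CARD('k) ^ n \<le> CARD('k) ^ m1" using assms card_spanset by simp
  moreover have "CARD('k) > 1"
  proof -
    have "card {0::'k, 1} \<le> CARD('k)" by (intro card_mono) auto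
    thus ?thesis by simp
  qed
  ultimately show ?thesis by simp
qed

lemma card_k_gt1: "CARD('k) > 1"
proof -
  have "card {0::'k, 1} \<le> CARD('k)" by (intro card_mono) auto
  thus ?thesis by simp
qed

lemma indep_full:
  assumes "indep v m1" "CARD('a) = CARD('k) ^ m1"
  shows "spanset v m1 = UNIV"
  using card_spanset[OF assms(1)] assms(2) by (metis card_subset_eq finite subset_UNIV)

lemma indep_ext:
  assumes "indep v n" "w \<notin> spanset v n"
  shows "indep (v(n := w)) (Suc n)"
  unfolding indep_def
proof (rule allI, rule impI)
  fix x :: "nat \<Rightarrow> 'k" assume h: "(\<Sum>i<Suc n. e (x i) * (v(n := w)) i) = 0"
  have s: "(\<Sum>i<n. e (x i) * (v(n := w)) i) = (\<Sum>i<n. e (x i) * v i)" by (rule sum.cong) auto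
  have h2: "(\<Sum>i<n. e (x i) * v i) + e (x n) * w = 0" using h s by simp
  have xn: "x n = 0"
  proof (rule ccontr)
    assume "x n \<noteq> 0"
    have "w = (\<Sum>i<n. e (- x i / x n) * v i)"
    proof -
      have "e (x n) * w = - (\<Sum>i<n. e (x i) * v i)" using h2 by (simp add: eq_neg_iff_add_eq_0 add.commute)
      hence "w = e (inverse (x n)) * (- (\<Sum>i<n. e (x i) * v i))"
        using \<open>x n \<noteq> 0\<close> e_mult[OF emb, of "inverse (x n)" "x n"] e_one[OF emb]
        by (metis mult.assoc mult.commute mult_1 right_inverse)
      also have "\<dots> = (\<Sum>i<n. e (- x i / x n) * v i)"
        by (simp add: sum_distrib_left e_mult[OF emb] e_minus[OF emb] divide_inverse algebra_simps sum_negf)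
      finally show ?thesis .
    qed
    hence "w \<in> spanset v n" by (auto simp: spanset_def)
    thus False using assms(2) by simp
  qed
  hence "(\<Sum>i<n. e (x i) * v i) = 0" using h2 e_zero[OF emb] by simp
  hence "\<forall>i<n. x i = 0" using assms(1) unfolding indep_def by blast
  thus "\<forall>i<Suc n. x i = 0" using xn less_Suc_eq by auto
qed

definition orth :: "(nat \<Rightarrow> 'a) \<Rightarrow> nat \<Rightarrow> bool" where
  "orth v n \<longleftrightarrow> (\<forall>i<n. \<forall>j<n. i \<noteq> j \<longrightarrow> B (v i) (v j) = 0)"

lemma B_comb_orth:
  assumes "orth v n" "j < n"
  shows "B (v j) (\<Sum>i<n. e (c i) * v i) = c j * Q (v j)"
proof -
  have "B (v j) (\<Sum>i<n. e (c i) * v i) = (\<Sum>i<n. c i * B (v j) (v i))" by (rule B_sumR)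
  also have "\<dots> = (\<Sum>i\<in>{j}. c i * B (v j) (v i))"
    using assms unfolding orth_def by (intro sum.mono_neutral_right) auto
  also have "\<dots> = c j * Q (v j)" by (simp add: B_diag)
  finally show ?thesis .
qed

lemma Q_comb_orth:
  assumes "orth v n"
  shows "Q (\<Sum>i<n. e (c i) * v i) = (\<Sum>i<n. c i ^ 2 * Q (v i))"
  using assms
proof (induction n)
  case 0 thus ?case by (simp add: Q_0)
next
  case (Suc n)
  have o: "orth v n" using Suc.prems unfolding orth_def by auto
  have "B (\<Sum>i<n. e (c i) * v i) (e (c n) * v n) = (\<Sum>i<n. c i * B (v i) (e (c n) * v n))"
    by (rule B_sumL)
  also have "\<dots> = 0" using Suc.prems unfolding orth_def by (auto simp: B_scaleR intro!: sum.neutral)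
  finally have b0: "B (\<Sum>i<n. e (c i) * v i) (e (c n) * v n) = 0" .
  have "Q (\<Sum>i<Suc n. e (c i) * v i) = Q ((\<Sum>i<n. e (c i) * v i) + e (c n) * v n)" by simp
  also have "\<dots> = Q (\<Sum>i<n. e (c i) * v i) + c n ^ 2 * Q (v n)" by (simp add: Q_add b0 Q_scale)
  also have "\<dots> = (\<Sum>i<Suc n. c i ^ 2 * Q (v i))" using Suc.IH[OF o] by simp
  finally show ?case .
qed

definition Rad :: "'a set" where "Rad = {x. \<forall>y. B x y = 0}"

definition Wk :: "(nat \<Rightarrow> 'a) \<Rightarrow> nat \<Rightarrow> 'a set" where
  "Wk v k = {x. \<forall>i<k. B (v i) x = 0}"

definition Pk :: "nat \<Rightarrow> (nat \<Rightarrow> 'a) \<Rightarrow> bool" where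
  "Pk k v \<longleftrightarrow> indep v k \<and> orth v k \<and> (\<forall>i<k. Q (v i) \<noteq> 0)"

lemma Pk_ext:
  assumes "Pk n v" "w \<in> Wk v n" "Q w \<noteq> 0"
  shows "Pk (Suc n) (v(n := w))"
proof -
  have ind: "indep v n" and o: "orth v n" and nz: "\<forall>i<n. Q (v i) \<noteq> 0" using assms(1) by (auto simp: Pk_def)
  have "w \<notin> spanset v n"
  proof
    assume "w \<in> spanset v n"
    then obtain c where w: "w = (\<Sum>i<n. e (c i) * v i)" by (auto simp: spanset_def)
    have "\<forall>j<n. c j = 0"
    proof (intro allI impI)
      fix j assume "j < n"
      have "B (v j) w = c j * Q (v j)" using B_comb_orth[OF o \<open>j < n\<close>] w by simp
      moreover have "B (v j) w = 0" using assms(2) \<open>j < n\<close> by (simp add: Wk_def)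
      ultimately show "c j = 0" using nz \<open>j < n\<close> by simp
    qed
    hence "w = 0" using w e_zero[OF emb] by simp
    thus False using assms(3) Q_0 by simp
  qed
  hence "indep (v(n := w)) (Suc n)" using indep_ext ind by blast
  moreover have "orth (v(n := w)) (Suc n)"
    unfolding orth_def
  proof (intro allI impI)
    fix i j assume "i < Suc n" "j < Suc n" "i \<noteq> j"
    show "B ((v(n := w)) i) ((v(n := w)) j) = 0"
    proof (cases "i = n")
      case True thus ?thesis using \<open>j < Suc n\<close> \<open>i \<noteq> j\<close> assms(2) B_sym by (auto simp: Wk_def)
    next
      case False
      show ?thesis
      proof (cases "j = n")
        case True thus ?thesis using False \<open>i < Suc n\<close> assms(2) by (auto simp: Wk_def)
      next
        case False2: False
        thus ?thesis using False \<open>i < Suc n\<close> \<open>j < Suc n\<close> \<open>i \<noteq> j\<close> o by (auto simp: orth_def)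
      qed
    qed
  qed
  moreover have "\<forall>i<Suc n. Q ((v(n := w)) i) \<noteq> 0" using nz assms(3) less_Suc_eq by auto
  ultimately show ?thesis by (simp add: Pk_def)
qed

lemma phase1:
  assumes "CARD('a) = CARD('k) ^ m1"
  shows "\<exists>k v. Pk k v \<and> (\<forall>w\<in>Wk v k. Q w = 0)"
proof (rule ccontr)
  assume "\<not> ?thesis"
  hence H: "\<And>k v. Pk k v \<Longrightarrow> \<exists>w\<in>Wk v k. Q w \<noteq> 0" by blast
  have "\<exists>v. Pk n v" for n
  proof (induction n)
    case 0 show ?case by (auto simp: Pk_def indep_def orth_def)
  next
    case (Suc n)
    then obtain v where "Pk n v" by blast
    then obtain w where "w \<in> Wk v n" "Q w \<noteq> 0" using H by blast
    thus ?case using Pk_ext \<open>Pk n v\<close> by blast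
  qed
  then obtain v where "Pk (Suc m1) v" by blast
  hence "indep v (Suc m1)" by (simp add: Pk_def)
  from indep_le[OF this assms] show False by simp
qed

lemma decomp:
  assumes "Pk k v"
  shows "x - (\<Sum>i<k. e (B (v i) x / Q (v i)) * v i) \<in> Wk v k"
proof -
  have o: "orth v k" and nz: "\<forall>i<k. Q (v i) \<noteq> 0" using assms by (auto simp: Pk_def)
  show ?thesis unfolding Wk_def
  proof (intro CollectI allI impI)
    fix j assume "j < k"
    have "B (v j) (x - (\<Sum>i<k. e (B (v i) x / Q (v i)) * v i)) =
          B (v j) x - B (v j) (\<Sum>i<k. e (B (v i) x / Q (v i)) * v i)"
      using B_addR[of "v j" x "- (\<Sum>i<k. e (B (v i) x / Q (v i)) * v i)"]
        B_scaleR[of "v j" "-1" "(\<Sum>i<k. e (B (v i) x / Q (v i)) * v i)"]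
      by (simp add: e_minus[OF emb] e_one[OF emb])
    also have "\<dots> = 0" using B_comb_orth[OF o \<open>j < k\<close>] nz \<open>j < k\<close> by simp
    finally show "B (v j) (x - (\<Sum>i<k. e (B (v i) x / Q (v i)) * v i)) = 0" .
  qed
qed

lemma Wk_add: "x \<in> Wk v k \<Longrightarrow> y \<in> Wk v k \<Longrightarrow> x + y \<in> Wk v k"
  by (auto simp: Wk_def B_addR)

lemma Wk_Rad:
  assumes "Pk k v" "\<forall>w\<in>Wk v k. Q w = 0"
  shows "Wk v k = Rad"
proof
  show "Rad \<subseteq> Wk v k"
  proof
    fix x assume "x \<in> Rad"
    hence "\<forall>y. B y x = 0" unfolding Rad_def using B_sym by auto
    thus "x \<in> Wk v k" unfolding Wk_def by auto
  qed
  show "Wk v k \<subseteq> Rad"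
  proof
    fix w assume w: "w \<in> Wk v k"
    show "w \<in> Rad" unfolding Rad_def
    proof (intro CollectI allI)
      fix y
      let ?s = "\<Sum>i<k. e (B (v i) y / Q (v i)) * v i"
      have w': "y - ?s \<in> Wk v k" by (rule decomp[OF assms(1)])
      have "B w y = B w ?s + B w (y - ?s)" using B_addR[of w ?s "y - ?s"] by simp
      also have "B w ?s = 0"
      proof -
        have "B w ?s = (\<Sum>i<k. (B (v i) y / Q (v i)) * B w (v i))" by (rule B_sumR)
        also have "\<dots> = 0"
        proof (rule sum.neutral, rule ballI)
          fix i assume "i \<in> {..<k}"
          hence "B (v i) w = 0" using w unfolding Wk_def by auto
          hence "B w (v i) = 0" using B_sym by metis
          thus "(B (v i) y / Q (v i)) * B w (v i) = 0" by simp
        qed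
        finally show ?thesis .
      qed
      also have "B w (y - ?s) = 0"
      proof -
        have "w + (y - ?s) \<in> Wk v k" using Wk_add w w' by blast
        hence "Q (w + (y - ?s)) = 0" "Q w = 0" "Q (y - ?s) = 0" using assms(2) w w' by auto
        thus ?thesis using Q_add[of w "y - ?s"] two by simp
      qed
      finally show "B w y = 0" by simp
    qed
  qed
qed

end




context
  fixes e :: "'k::{finite,field} \<Rightarrow> 'a::{finite,field}" and Q :: "'a \<Rightarrow> 'k"
  assumes emb: "field_emb e" and qf: "quad_form e Q" and two: "(2::'k) \<noteq> 0"
begin

lemmas sd = spanset_def[OF emb qf two]
lemmas od = orth_def[OF emb qf two]
lemmas rd = Rad_def[OF emb qf two]

lemma spanset_add:
  "x \<in> spanset e v n \<Longrightarrow> y \<in> spanset e v n \<Longrightarrow> x + y \<in> spanset e v n"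
proof -
  assume "x \<in> spanset e v n" "y \<in> spanset e v n"
  then obtain c d where "x = (\<Sum>i<n. e (c i) * v i)" "y = (\<Sum>i<n. e (d i) * v i)"
    unfolding sd by blast
  hence "x + y = (\<Sum>i<n. e (c i + d i) * v i)" using comb_add[OF emb qf two] by simp
  thus "x + y \<in> spanset e v n" unfolding sd by (intro range_eqI[where x="\<lambda>i. c i + d i"])
qed

lemma phase2:
  assumes card: "CARD('a) = CARD('k) ^ m1" and P: "Pk e Q k v" and Z: "\<forall>w\<in>Wk Q v k. Q w = 0"
  shows "\<exists>V. indep e V m1 \<and> (\<forall>i<k. V i = v i) \<and> (\<forall>i. k \<le> i \<and> i < m1 \<longrightarrow> V i \<in> Rad Q)"
proof -
  have ind: "indep e v k" using P by (simp add: Pk_def[OF emb qf two])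
  have km: "k \<le> m1" by (rule indep_le[OF emb qf two ind card])
  have rad: "Wk Q v k = Rad Q" by (rule Wk_Rad[OF emb qf two P Z])
  have claim: "k + d \<le> m1 \<longrightarrow> (\<exists>V. indep e V (k + d) \<and> (\<forall>i<k. V i = v i) \<and> (\<forall>i. k \<le> i \<and> i < k + d \<longrightarrow> V i \<in> Rad Q))" for d
  proof (induction d)
    case 0 show ?case using ind by auto
  next
    case (Suc d)
    show ?case
    proof
      assume le: "k + Suc d \<le> m1"
      then obtain V where V: "indep e V (k + d)" "\<forall>i<k. V i = v i" "\<forall>i. k \<le> i \<and> i < k + d \<longrightarrow> V i \<in> Rad Q"
        using Suc.IH by auto
      let ?n = "k + d"
      have "\<not> Rad Q \<subseteq> spanset e V ?n"
      proof
        assume sub: "Rad Q \<subseteq> spanset e V ?n"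
        have "UNIV \<subseteq> spanset e V ?n"
        proof
          fix x :: 'a
          let ?c = "\<lambda>i. if i < k then bform Q (v i) x / Q (v i) else 0"
          let ?s = "\<Sum>i<k. e (bform Q (v i) x / Q (v i)) * v i"
          have "?s = (\<Sum>i<?n. e (?c i) * V i)"
          proof -
            have "(\<Sum>i<?n. e (?c i) * V i) = (\<Sum>i<k. e (?c i) * V i)"
              by (rule sum.mono_neutral_right) (auto simp: e_zero[OF emb])
            also have "\<dots> = ?s" using V(2) by (intro sum.cong) auto
            finally show ?thesis by simp
          qed
          hence s: "?s \<in> spanset e V ?n" unfolding sd by (intro range_eqI[where x="?c"])
          have "x - ?s \<in> Rad Q" using decomp[OF emb qf two P, of x] rad by simp
          hence "x - ?s \<in> spanset e V ?n" using sub by blast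
          from spanset_add[OF s this] show "x \<in> spanset e V ?n" by simp
        qed
        hence "spanset e V ?n = UNIV" by blast
        hence "card (spanset e V ?n) = CARD('a)" by simp
        hence "CARD('k) ^ ?n = CARD('k) ^ m1" using card_spanset[OF emb qf two V(1)] card by simp
        hence "?n = m1" using card_k_gt1[OF emb qf two] power_inject_exp by blast
        thus False using le by simp
      qed
      then obtain w where w: "w \<in> Rad Q" "w \<notin> spanset e V ?n" by blast
      have "indep e (V(?n := w)) (Suc ?n)" by (rule indep_ext[OF emb qf two V(1) w(2)])
      moreover have "\<forall>i<k. (V(?n := w)) i = v i" using V(2) by auto
      moreover have "\<forall>i. k \<le> i \<and> i < k + Suc d \<longrightarrow> (V(?n := w)) i \<in> Rad Q"
        using V(3) w(1) less_Suc_eq by auto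
      ultimately show "\<exists>V. indep e V (k + Suc d) \<and> (\<forall>i<k. V i = v i) \<and> (\<forall>i. k \<le> i \<and> i < k + Suc d \<longrightarrow> V i \<in> Rad Q)"
        by (metis add_Suc_right)
    qed
  qed
  from claim[of "m1 - k"] km show ?thesis by simp
qed

lemma Rad_Q0: "x \<in> Rad Q \<Longrightarrow> Q x = 0"
  using B_diag[OF emb qf two, of x] by (simp add: rd)

lemma diag_basis:
  assumes card: "CARD('a) = CARD('k) ^ m1"
  shows "\<exists>V k. indep e V m1 \<and> orth Q V m1 \<and> k \<le> m1 \<and> (\<forall>i<k. Q (V i) \<noteq> 0) \<and>
     (\<forall>i. k \<le> i \<and> i < m1 \<longrightarrow> V i \<in> Rad Q)"
proof -
  obtain k v where P: "Pk e Q k v" and Z: "\<forall>w\<in>Wk Q v k. Q w = 0"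
    using phase1[OF emb qf two card] by blast
  obtain V where V: "indep e V m1" "\<forall>i<k. V i = v i" "\<forall>i. k \<le> i \<and> i < m1 \<longrightarrow> V i \<in> Rad Q"
    using phase2[OF card P Z] by blast
  have ov: "orth Q v k" and nz: "\<forall>i<k. Q (v i) \<noteq> 0" and iv: "indep e v k" using P by (auto simp: Pk_def[OF emb qf two])
  have km: "k \<le> m1" by (rule indep_le[OF emb qf two iv card])
  have "orth Q V m1" unfolding od
  proof (intro allI impI)
    fix i j assume ij: "i < m1" "j < m1" "i \<noteq> j"
    show "bform Q (V i) (V j) = 0"
    proof (cases "i < k")
      case True
      show ?thesis
      proof (cases "j < k")
        case True thus ?thesis using \<open>i < k\<close> ij ov V(2) by (auto simp: od)
      next
        case False
        hence "V j \<in> Rad Q" using V(3) ij by auto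
        hence "bform Q (V j) (V i) = 0" by (simp add: rd)
        thus ?thesis using B_sym[OF emb qf two, of "V j" "V i"] by simp
      qed
    next
      case False
      hence "V i \<in> Rad Q" using V(3) ij by auto
      thus ?thesis by (simp add: rd)
    qed
  qed
  moreover have "\<forall>i<k. Q (V i) \<noteq> 0" using V(2) nz by auto
  ultimately show ?thesis using V km by blast
qed

lemma vs_e': "vector_space (\<lambda>a (x::'a). e a * x)" by (rule vs_e[OF emb])

lemma Rad_subspace: "module.subspace (\<lambda>a (x::'a). e a * x) (Rad Q)"
proof -
  interpret V: vector_space "\<lambda>a (x::'a). e a * x" by (rule vs_e')
  show ?thesis
    unfolding V.subspace_def rd
    by (auto simp: B_0L[OF emb qf two] B_addL[OF emb qf two] B_scaleL[OF emb qf two])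
qed

lemma rank_eq:
  assumes card: "CARD('a) = CARD('k) ^ m1"
    and V: "indep e V m1" "orth Q V m1" "k \<le> m1" "\<forall>i<k. Q (V i) \<noteq> 0" "\<forall>i. k \<le> i \<and> i < m1 \<longrightarrow> V i \<in> Rad Q"
  shows "qf_rank e m1 Q = k"
proof -
  let ?f = "\<lambda>c. \<Sum>i<m1. e (c i) * V i"
  let ?C = "PiE {..<m1} (\<lambda>i. if i < k then {0} else (UNIV::'k set))"
  have CP: "?C \<subseteq> PiE {..<m1} (\<lambda>_. UNIV)" by (auto simp: PiE_iff)
  have R: "Rad Q = ?f ` ?C"
  proof
    show "?f ` ?C \<subseteq> Rad Q"
    proof
      fix x assume "x \<in> ?f ` ?C"
      then obtain c where c: "c \<in> ?C" "x = ?f c" by blast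
      show "x \<in> Rad Q" unfolding rd
      proof (intro CollectI allI)
        fix y
        have "bform Q x y = (\<Sum>i<m1. c i * bform Q (V i) y)" using c(2) B_sumL[OF emb qf two] by simp
        also have "\<dots> = 0"
        proof (rule sum.neutral, rule ballI)
          fix i assume i: "i \<in> {..<m1}"
          show "c i * bform Q (V i) y = 0"
          proof (cases "i < k")
            case True thus ?thesis using PiE_mem[OF c(1) i] by simp
          next
            case False thus ?thesis using V(5) i by (auto simp: rd)
          qed
        qed
        finally show "bform Q x y = 0" .
      qed
    qed
    show "Rad Q \<subseteq> ?f ` ?C"
    proof
      fix x assume x: "x \<in> Rad Q"
      have "x \<in> spanset e V m1" using indep_full[OF emb qf two V(1) card] by simp
      then obtain c where c: "c \<in> PiE {..<m1} (\<lambda>_. UNIV)" "x = ?f c"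
        using spanset_PiE[OF emb qf two] by blast
      have "\<forall>j<k. c j = 0"
      proof (intro allI impI)
        fix j assume j: "j < k"
        have "bform Q (V j) x = c j * Q (V j)" using B_comb_orth[OF emb qf two V(2)] j V(3) c(2) by simp
        moreover have "bform Q (V j) x = 0" using x B_sym[OF emb qf two, of "V j" x] by (simp add: rd)
        ultimately show "c j = 0" using V(4) j by simp
      qed
      hence "c \<in> ?C" using c(1) by (auto simp: PiE_iff)
      thus "x \<in> ?f ` ?C" using c(2) by blast
    qed
  qed
  have "card (Rad Q) = card ?C"
    unfolding R by (rule card_image, rule inj_on_subset[OF indep_inj[OF emb qf two V(1)] CP])
  also have "\<dots> = (\<Prod>i<m1. card (if i < k then {0} else (UNIV::'k set)))"
    by (simp add: card_PiE)
  also have "\<dots> = (\<Prod>i<m1. if i < k then 1 else CARD('k))"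
    by (intro prod.cong refl) auto
  also have "\<dots> = CARD('k) ^ (m1 - k)"
  proof -
    have "(\<Prod>i<m1. if i < k then 1 else CARD('k)) = (\<Prod>i\<in>{k..<m1}. CARD('k))"
      by (rule prod.mono_neutral_cong_right) auto
    thus ?thesis by simp
  qed
  finally have cR: "card (Rad Q) = CARD('k) ^ (m1 - k)" .
  interpret VS: vector_space "\<lambda>a (x::'a). e a * x" by (rule vs_e')
  have "VS.dim (Rad Q) = m1 - k"
    by (rule VS.dim_card_fin) (use Rad_subspace cR card_k_gt1[OF emb qf two] in auto)
  moreover have "{x. \<forall>y. bform Q x y = 0} = Rad Q" by (simp add: rd)
  ultimately show ?thesis unfolding qf_rank_def using V(3) by simp
qed

end




lemma count_Q:
  fixes e :: "'k::{finite,field} \<Rightarrow> 'a::{finite,field}" and Q :: "'a \<Rightarrow> 'k"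
  assumes emb: "field_emb e" and qf: "quad_form e Q" and two: "(2::'k) \<noteq> 0"
    and card: "CARD('a) = CARD('k) ^ m1"
  shows "\<exists>lam. qf_rank e m1 Q \<le> m1 \<and> (\<forall>i<qf_rank e m1 Q. lam i \<noteq> 0) \<and>
     qf_eps e m1 Q = qchar (\<Prod>i<qf_rank e m1 Q. lam i) \<and>
     (\<forall>t. card {x. Q x = t} = CARD('k) ^ (m1 - qf_rank e m1 Q) * cnt lam (qf_rank e m1 Q) t)"
proof -
  define r where "r = qf_rank e m1 Q"
  have rle: "r \<le> m1" unfolding r_def qf_rank_def by simp
  obtain V k where V: "indep e V m1" "orth Q V m1" "k \<le> m1" "\<forall>i<k. Q (V i) \<noteq> 0"
      "\<forall>i. k \<le> i \<and> i < m1 \<longrightarrow> V i \<in> Rad Q"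
    using diag_basis[OF emb qf two card] by blast
  have rk: "r = k" unfolding r_def by (rule rank_eq[OF emb qf two card V])
  have Qform: "Q (\<Sum>i<m1. e (x i) * V i) = (\<Sum>i<r. (\<lambda>i. Q (V i)) i * x i ^ 2)" for x
  proof -
    have "Q (\<Sum>i<m1. e (x i) * V i) = (\<Sum>i<m1. x i ^ 2 * Q (V i))" by (rule Q_comb_orth[OF emb qf two V(2)])
    also have "\<dots> = (\<Sum>i<k. x i ^ 2 * Q (V i))"
      by (rule sum.mono_neutral_right) (use V(3,5) Rad_Q0[OF emb qf two] in auto)
    finally show ?thesis using rk by (simp add: mult.commute)
  qed
  have ex: "\<exists>\<epsilon>. \<exists>(v::nat \<Rightarrow> 'a) (lam::nat \<Rightarrow> 'k).
      (\<forall>x::nat \<Rightarrow> 'k. (\<Sum>i<m1. e (x i) * v i) = 0 \<longrightarrow> (\<forall>i<m1. x i = 0)) \<and>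
      (\<forall>i<qf_rank e m1 Q. lam i \<noteq> 0) \<and>
      (\<forall>x::nat \<Rightarrow> 'k. Q (\<Sum>i<m1. e (x i) * v i) = (\<Sum>i<qf_rank e m1 Q. lam i * (x i) ^ 2)) \<and>
      \<epsilon> = qchar (\<Prod>i<qf_rank e m1 Q. lam i)"
    apply (rule exI[of _ "qchar (\<Prod>i<qf_rank e m1 Q. Q (V i))"])
    apply (rule exI[of _ V])
    apply (rule exI[of _ "\<lambda>i. Q (V i)"])
    using V(1,4) Qform rk unfolding indep_def[OF emb qf two] r_def by auto
  from someI_ex[OF ex] obtain v lam where vl:
      "\<forall>x::nat \<Rightarrow> 'k. (\<Sum>i<m1. e (x i) * v i) = 0 \<longrightarrow> (\<forall>i<m1. x i = 0)"
      "\<forall>i<r. lam i \<noteq> 0"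
      "\<forall>x::nat \<Rightarrow> 'k. Q (\<Sum>i<m1. e (x i) * v i) = (\<Sum>i<r. lam i * (x i) ^ 2)"
      "qf_eps e m1 Q = qchar (\<Prod>i<r. lam i)"
    unfolding qf_eps_def r_def by blast
  have iv: "indep e v m1" using vl(1) unfolding indep_def[OF emb qf two] by blast
  define lam' where "lam' i = (if i < r then lam i else 0)" for i
  let ?f = "\<lambda>c. \<Sum>i<m1. e (c i) * v i"
  let ?P = "PiE {..<m1} (\<lambda>_. UNIV::'k set)"
  have fP: "?f ` ?P = UNIV"
    using indep_full[OF emb qf two iv card] unfolding spanset_PiE[OF emb qf two] .
  have cnt_eq: "card {x. Q x = t} = cnt lam' m1 t" for t
  proof -
    have "{x. Q x = t} = ?f ` {c \<in> ?P. Q (?f c) = t}"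
    proof
      show "{x. Q x = t} \<subseteq> ?f ` {c \<in> ?P. Q (?f c) = t}"
      proof
        fix x assume x: "x \<in> {x. Q x = t}"
        have "x \<in> ?f ` ?P" using fP by simp
        then obtain c where "c \<in> ?P" "x = ?f c" by blast
        thus "x \<in> ?f ` {c \<in> ?P. Q (?f c) = t}" using x by blast
      qed
    qed blast
    hence "card {x. Q x = t} = card {c \<in> ?P. Q (?f c) = t}"
      by (simp add: card_image inj_on_subset[OF indep_inj[OF emb qf two iv]])
    also have "{c \<in> ?P. Q (?f c) = t} = {c \<in> ?P. (\<Sum>i<m1. lam' i * c i ^ 2) = t}"
    proof -
      have "Q (?f c) = (\<Sum>i<m1. lam' i * c i ^ 2)" for c
      proof -
        have "(\<Sum>i<m1. lam' i * c i ^ 2) = (\<Sum>i<r. lam' i * c i ^ 2)"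
          by (rule sum.mono_neutral_right) (use rle in \<open>auto simp: lam'_def\<close>)
        also have "\<dots> = (\<Sum>i<r. lam i * c i ^ 2)" by (simp add: lam'_def)
        finally show ?thesis using vl(3) by simp
      qed
      thus ?thesis by simp
    qed
    finally show ?thesis by (simp add: cnt_def)
  qed
  show ?thesis
  proof (rule exI[of _ lam'], intro conjI)
    show "qf_rank e m1 Q \<le> m1" using rle r_def by simp
    show "\<forall>i<qf_rank e m1 Q. lam' i \<noteq> 0" using vl(2) by (simp add: lam'_def r_def)
    show "qf_eps e m1 Q = qchar (\<Prod>i<qf_rank e m1 Q. lam' i)" using vl(4) by (simp add: lam'_def r_def)
    show "\<forall>t. card {x. Q x = t} = CARD('k) ^ (m1 - qf_rank e m1 Q) * cnt lam' (qf_rank e m1 Q) t"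
    proof
      fix t
      show "card {x. Q x = t} = CARD('k) ^ (m1 - qf_rank e m1 Q) * cnt lam' (qf_rank e m1 Q) t"
        using cnt_eq[of t] cnt_zeros[of r m1 lam' t] rle by (simp add: lam'_def r_def)
    qed
  qed
qed




lemma card_frob_fixed:
  assumes "n \<ge> 2"
  shows "card {x::'b::field. x ^ n = x} \<le> n"
proof -
  let ?P = "monom 1 n + [:0, -1:] :: 'b poly"
  have dl: "degree [:0, -1::'b:] < n" using assms by simp
  have deg: "degree ?P = n" using assms by (subst degree_add_eq_left) (use dl in \<open>auto simp: degree_monom_eq\<close>)
  hence "?P \<noteq> 0" using assms by auto
  moreover have "{x. poly ?P x = 0} = {x. x ^ n = x}" by (auto simp: poly_monom)
  ultimately show ?thesis using card_roots_le[of ?P] deg by simp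
qed

lemma char_emb:
  fixes e :: "'k::{finite,field} \<Rightarrow> 'b::field"
  assumes emb: "field_emb e" and p: "prime p" and card: "CARD('k) = p ^ m"
  shows "CHAR('b) = p"
proof -
  have "(of_nat p :: 'k) ^ m = 0" using ff_of_nat_card[where 'k='k] card by (simp add: of_nat_power)
  hence k0: "(of_nat p :: 'k) = 0" by simp
  have "(of_nat p :: 'b) = e (of_nat p)" by (simp add: e_of_nat[OF emb])
  also have "\<dots> = 0" using k0 e_zero[OF emb] by simp
  finally have "CHAR('b) dvd p" by (simp add: of_nat_eq_0_iff_char_dvd)
  moreover have "CHAR('b) \<noteq> 1" by simp
  ultimately show ?thesis using p by (meson prime_nat_iff)
qed

context
  fixes e :: "'k::{finite,field} \<Rightarrow> 'b::{finite,field}" and q s p m :: nat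
  assumes emb: "field_emb e" and p: "prime p" and cardk: "CARD('k) = q" and q: "q = p ^ m"
    and cardb: "CARD('b) = q ^ s" and s: "s \<ge> 1"
begin

lemma charb: "CHAR('b) = p" using char_emb[OF emb p] cardk q by simp

lemma frob_add: "(x + y :: 'b) ^ (q ^ j) = x ^ (q ^ j) + y ^ (q ^ j)"
  by (rule freshmans_dream') (simp_all add: charb p q power_mult[symmetric])

lemma frob_sum: "(sum f A :: 'b) ^ (q ^ j) = (\<Sum>i\<in>A. f i ^ (q ^ j))"
  by (rule freshmans_dream_sum') (simp_all add: charb p q power_mult[symmetric])

lemma q_ge2: "q \<ge> 2"
proof -
  have "card {0::'k, 1} \<le> CARD('k)" by (intro card_mono) auto
  thus ?thesis using cardk by simp
qed

lemma range_e: "range e = {z::'b. z ^ q = z}"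
proof -
  have sub: "range e \<subseteq> {z::'b. z ^ q = z}"
  proof
    fix z assume "z \<in> range e"
    then obtain a where "z = e a" by blast
    thus "z \<in> {z. z ^ q = z}" using e_pow[OF emb, of a q] ff_pow_card[of a] cardk by simp
  qed
  have "card (range e) = q" using card_image[OF e_inj[OF emb]] cardk by simp
  moreover have "card {z::'b. z ^ q = z} \<le> q" using card_frob_fixed q_ge2 by blast
  ultimately show ?thesis using sub by (metis card_seteq finite)
qed

definition S :: "'b \<Rightarrow> 'b" where "S y = (\<Sum>j<s. y ^ (q ^ j))"

lemma S_fixed: "S y ^ q = S y"
proof -
  have "S y ^ q = (\<Sum>j<s. (y ^ (q ^ j)) ^ q)" unfolding S_def using frob_sum[of _ _ 1] by simp
  also have "\<dots> = (\<Sum>j<s. y ^ (q ^ Suc j))" by (simp add: power_mult[symmetric] mult.commute)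
  also have "\<dots> = (\<Sum>j<s. y ^ (q ^ j))"
  proof -
    let ?f = "\<lambda>j. y ^ (q ^ j)"
    have A: "(\<Sum>j<Suc s. ?f j) = ?f 0 + (\<Sum>j<s. ?f (Suc j))" by (rule sum.lessThan_Suc_shift)
    have B: "(\<Sum>j<Suc s. ?f j) = (\<Sum>j<s. ?f j) + ?f s" by (rule sum.lessThan_Suc)
    have C: "?f s = ?f 0" using ff_pow_card[of y] cardb by simp
    have D: "?f 0 + (\<Sum>j<s. ?f j) = ?f 0 + (\<Sum>j<s. ?f (Suc j))" using A B C by (simp only: add.commute)
    hence "(\<Sum>j<s. ?f j) = (\<Sum>j<s. ?f (Suc j))" by (rule add_left_imp_eq)
    thus ?thesis by (rule sym)
  qed
  finally show ?thesis unfolding S_def .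
qed

lemma S_range: "S y \<in> range e" using S_fixed range_e by blast

definition T :: "'b \<Rightarrow> 'k" where "T y = the_inv e (S y)"

lemma T_tr: "tr e q s y = T y" by (simp add: tr_def T_def S_def)

lemma e_T: "e (T y) = S y"
  unfolding T_def using S_range f_the_inv_into_f[OF e_inj[OF emb]] by blast

lemma T_eqI: "e a = S y \<Longrightarrow> T y = a"
  using e_T[of y] e_inj[OF emb] by (metis injD)

lemma T_add: "T (x + y) = T x + T y"
proof (rule T_eqI)
  show "e (T x + T y) = S (x + y)"
    by (simp add: e_add[OF emb] e_T S_def frob_add sum.distrib)
qed

lemma T_scale: "T (e a * y) = a * T y"
proof (rule T_eqI)
  have "e a ^ (q ^ j) = e a" for j
    using e_pow[OF emb] ff_pow_card_pow[of a j] cardk by metis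
  thus "e (a * T y) = S (e a * y)"
    by (simp add: e_mult[OF emb] e_T S_def power_mult_distrib sum_distrib_left)
qed

lemma T_0: "T 0 = 0" using T_scale[of 0 0] e_zero[OF emb] by simp

lemma S_nonzero: "\<exists>y. S y \<noteq> 0"
proof -
  let ?P = "(\<Sum>j<s. monom 1 (q ^ j)) :: 'b poly"
  have inj: "inj (\<lambda>j. q ^ j)" using q_ge2 by (intro injI) (simp add: power_inject_exp)
  have c: "coeff ?P (q ^ (s - 1)) = 1"
  proof -
    have "coeff ?P (q ^ (s - 1)) = (\<Sum>j<s. if q ^ j = q ^ (s - 1) then 1 else 0)"
      by (simp add: coeff_sum)
    also have "\<dots> = (\<Sum>j\<in>{s - 1}. (1::'b))"
      by (rule sum.mono_neutral_cong_right) (use s inj in \<open>auto dest: injD\<close>)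
    finally show ?thesis by simp
  qed
  hence nz: "?P \<noteq> 0" by auto
  have "degree ?P \<le> q ^ (s - 1)"
  proof (rule degree_sum_le)
    fix j assume "j \<in> {..<s}"
    hence "q ^ j \<le> q ^ (s - 1)" using q_ge2 by (intro power_increasing) auto
    thus "degree (monom (1::'b) (q ^ j)) \<le> q ^ (s - 1)" by (simp add: degree_monom_eq)
  qed simp
  hence "card {x. poly ?P x = 0} \<le> q ^ (s - 1)" using card_roots_le[OF nz] by simp
  also have "\<dots> < q ^ s" using q_ge2 s by (intro power_strict_increasing) auto
  finally have "card {x. poly ?P x = 0} < CARD('b)" using cardb by simp
  hence "{x. poly ?P x = 0} \<noteq> UNIV" by auto
  then obtain y where "poly ?P y \<noteq> 0" by blast
  moreover have "poly ?P y = S y" by (simp add: S_def poly_sum poly_monom)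
  ultimately show ?thesis by auto
qed

lemma T_nonzero: "\<exists>y. T y \<noteq> 0"
proof -
  obtain y where "S y \<noteq> 0" using S_nonzero by blast
  hence "T y \<noteq> 0" using e_T[of y] e_zero[OF emb] by auto
  thus ?thesis by blast
qed

lemma T_fiber:
  assumes "b \<noteq> 0"
  shows "card {y. T (b * y) = c} = q ^ (s - 1)"
proof -
  obtain y0 where y0: "T y0 \<noteq> 0" using T_nonzero by blast
  let ?y1 = "y0 / b"
  have by1: "b * ?y1 = y0" using assms by (simp add: field_simps)
  have Llin: "T (b * (y + e t * ?y1)) = T (b * y) + t * T y0" for y t
  proof -
    have "b * (y + e t * ?y1) = b * y + e t * (b * ?y1)" by (simp only: distrib_left mult.left_commute)
    hence "T (b * (y + e t * ?y1)) = T (b * y) + T (e t * (b * ?y1))" by (simp only: T_add)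
    also have "T (e t * (b * ?y1)) = t * T y0" by (simp only: T_scale by1)
    finally show ?thesis .
  qed
  have fib: "card {y. T (b * y) = c} = card {y. T (b * y) = 0}" for c
  proof -
    let ?t = "c / T y0"
    have "bij_betw (\<lambda>y. y + e ?t * ?y1) {y. T (b * y) = 0} {y. T (b * y) = c}"
    proof (rule bij_betw_byWitness[where f' = "\<lambda>y. y - e ?t * ?y1"])
      show "(\<lambda>y. y + e ?t * ?y1) ` {y. T (b * y) = 0} \<subseteq> {y. T (b * y) = c}"
        using Llin y0 by auto
      show "(\<lambda>y. y - e ?t * ?y1) ` {y. T (b * y) = c} \<subseteq> {y. T (b * y) = 0}"
      proof
        fix z assume "z \<in> (\<lambda>y. y - e ?t * ?y1) ` {y. T (b * y) = c}"
        then obtain y where y: "T (b * y) = c" "z = y - e ?t * ?y1" by blast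
        have "T (b * (z + e ?t * ?y1)) = T (b * z) + ?t * T y0" by (rule Llin)
        hence "c = T (b * z) + c" using y y0 by simp
        thus "z \<in> {y. T (b * y) = 0}" by simp
      qed
    qed auto
    thus ?thesis by (simp add: bij_betw_same_card)
  qed
  have "card (UNIV::'b set) = (\<Sum>c\<in>(UNIV::'k set). card {y. T (b * y) = c})"
  proof -
    have "(\<Sum>c\<in>(UNIV::'k set). card {y. T (b * y) = c}) = (\<Sum>c\<in>(UNIV::'k set). \<Sum>y\<in>{x. x \<in> UNIV \<and> T (b * x) = c}. (1::nat))"
      by simp
    also have "\<dots> = (\<Sum>y\<in>(UNIV::'b set). 1)" by (rule sum.group) auto
    finally show ?thesis by simp
  qed
  also have "\<dots> = (\<Sum>c\<in>(UNIV::'k set). card {y. T (b * y) = 0})" by (rule sum.cong[OF refl], rule fib)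
  also have "\<dots> = q * card {y. T (b * y) = 0}" using cardk by simp
  finally have "q * card {y. T (b * y) = 0} = q * q ^ (s - 1)" using cardb s
    by (metis Suc_pred' less_eq_Suc_le power_Suc One_nat_def)
  hence "card {y. T (b * y) = 0} = q ^ (s - 1)" using q_ge2 by simp
  thus ?thesis using fib by simp
qed

end




definition cw :: "('b::times \<Rightarrow> 'k) \<Rightarrow> ('a \<Rightarrow> 'k) \<Rightarrow> 'k \<Rightarrow> 'b \<Rightarrow> 'k \<Rightarrow> ('a \<times> 'b \<Rightarrow> 'k::field)" where
  "cw Tf Q a b c = (\<lambda>(x, y). a * Q x + Tf (b * y) + c)"

context
  fixes e2 :: "'k::{finite,field} \<Rightarrow> 'b::{finite,field}" and Q :: "'a::{finite,zero} \<Rightarrow> 'k" and Tf :: "'b \<Rightarrow> 'k"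
    and q m1 m2 :: nat
  assumes emb2: "field_emb e2"
    and T_add: "\<And>x y. Tf (x + y) = Tf x + Tf y"
    and T_scale: "\<And>a y. Tf (e2 a * y) = a * Tf y"
    and T_fib: "\<And>b c. b \<noteq> 0 \<Longrightarrow> card {y. Tf (b * y) = c} = q ^ (m2 - 1)"
    and T_nz: "\<exists>y. Tf y \<noteq> 0"
    and Q0: "Q 0 = 0" and Qnz: "\<exists>x. Q x \<noteq> 0"
    and cardk: "CARD('k) = q" and carda: "CARD('a) = q ^ m1" and cardb: "CARD('b) = q ^ m2"
    and m2: "m2 \<ge> 1"
begin

lemma T0: "Tf 0 = 0" using T_scale[of 0 0] e_zero[OF emb2] by simp

lemma T_diff: "Tf (x - y) = Tf x - Tf y"
proof -
  have "Tf (x - y) + Tf y = Tf x" using T_add[of "x - y" y] by simp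
  thus ?thesis by (simp add: eq_diff_eq)
qed

lemma cw_inj: "inj (\<lambda>(a, b, c). cw Tf Q a b c)"
proof (rule injI)
  fix u v :: "'k \<times> 'b \<times> 'k"
  assume eq0: "(\<lambda>(a, b, c). cw Tf Q a b c) u = (\<lambda>(a, b, c). cw Tf Q a b c) v"
  obtain a b c where u: "u = (a, b, c)" by (cases u) auto
  obtain a' b' c' where v: "v = (a', b', c')" by (cases v) auto
  have eq: "cw Tf Q a b c = cw Tf Q a' b' c'" using eq0 u v by simp
  have ev: "a * Q x + Tf (b * y) + c = a' * Q x + Tf (b' * y) + c'" for x y
    using fun_cong[OF eq, of "(x, y)"] by (simp add: cw_def)
  have cc: "c = c'" using ev[of 0 0] Q0 T0 by simp
  obtain x0 where x0: "Q x0 \<noteq> 0" using Qnz by blast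
  have "a * Q x0 = a' * Q x0" using ev[of x0 0] T0 cc by simp
  hence aa: "a = a'" using x0 by simp
  have bb: "b = b'"
  proof (rule ccontr)
    assume "b \<noteq> b'"
    obtain y0 where y0: "Tf y0 \<noteq> 0" using T_nz by blast
    have "Tf (b * (y0 / (b - b'))) = Tf (b' * (y0 / (b - b')))" using ev[of 0 "y0 / (b - b')"] cc Q0 by simp
    hence "Tf (b * (y0 / (b - b')) - b' * (y0 / (b - b'))) = 0" by (simp add: T_diff)
    moreover have "b * (y0 / (b - b')) - b' * (y0 / (b - b')) = y0"
    proof -
      have "b * (y0 / (b - b')) - b' * (y0 / (b - b')) = (b - b') * (y0 / (b - b'))" by (simp only: left_diff_distrib)
      also have "\<dots> = y0" using \<open>b \<noteq> b'\<close> by simp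
      finally show ?thesis .
    qed
    ultimately show False using y0 by simp
  qed
  show "u = v" using u v aa bb cc by simp
qed

lemma count_b:
  assumes "b \<noteq> 0"
  shows "card {z. cw Tf Q a b c z = w} = q ^ (m1 + m2 - 1)"
proof -
  have "{z. cw Tf Q a b c z = w} = Sigma UNIV (\<lambda>x. {y. Tf (b * y) = w - a * Q x - c})"
    by (auto simp: cw_def algebra_simps)
  hence "card {z. cw Tf Q a b c z = w} = (\<Sum>x\<in>(UNIV::'a set). card {y. Tf (b * y) = w - a * Q x - c})"
    by (simp add: card_SigmaI)
  also have "\<dots> = (\<Sum>x\<in>(UNIV::'a set). q ^ (m2 - 1))" using T_fib[OF assms] by simp
  also have "\<dots> = q ^ m1 * q ^ (m2 - 1)" using carda by simp
  also have "\<dots> = q ^ (m1 + m2 - 1)" using m2 by (simp add: power_add[symmetric])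
  finally show ?thesis .
qed

lemma count_0: "card {z. cw Tf Q 0 0 c z = w} = (if w = c then q ^ (m1 + m2) else 0)"
proof -
  have "{z. cw Tf Q 0 0 c z = w} = (if w = c then UNIV else {})" by (auto simp: cw_def T0)
  thus ?thesis using carda cardb by (simp add: power_add)
qed

lemma count_a:
  assumes "a \<noteq> 0"
  shows "card {z. cw Tf Q a 0 c z = w} = q ^ m2 * card {x. Q x = (w - c) / a}"
proof -
  have "{z. cw Tf Q a 0 c z = w} = {x. Q x = (w - c) / a} \<times> UNIV"
    using assms by (auto simp: cw_def T0 field_simps)
  thus ?thesis using cardb by (simp add: card_cartesian_product)
qed

lemma cw_add: "(\<lambda>z. cw Tf Q a b c z + cw Tf Q a' b' c' z) = cw Tf Q (a + a') (b + b') (c + c')"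
  by (auto simp: cw_def fun_eq_iff T_add[symmetric] algebra_simps)

lemma cw_scale: "(\<lambda>z. k * cw Tf Q a b c z) = cw Tf Q (k * a) (e2 k * b) (k * c)"
  by (auto simp: cw_def fun_eq_iff algebra_simps T_scale[symmetric])

lemma cw_zero: "(\<lambda>z. 0) = cw Tf Q 0 0 0"
  by (auto simp: cw_def fun_eq_iff T0)

end




lemma image_mset_mset_set_sum:
  "finite A \<Longrightarrow> image_mset g (mset_set A) = (\<Sum>x\<in>A. {#g x#})"
  by (induction A rule: finite_induct) auto

lemma msum_const:
  "finite A \<Longrightarrow> (\<forall>x\<in>A. f x = v) \<Longrightarrow> (\<Sum>x\<in>A. {#f x#}) = replicate_mset (card A) v"
proof (induction A rule: finite_induct)
  case empty thus ?case by simp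
next
  case (insert x F)
  thus ?case by (simp add: add_mset_add_single[symmetric])
qed

lemma rep_plus: "replicate_mset (m + n) v = replicate_mset m v + replicate_mset n v"
  by (simp add: multiset_eq_iff)

lemma msum_rep:
  "finite A \<Longrightarrow> (\<Sum>x\<in>A. replicate_mset n v) = replicate_mset (card A * n) v"
proof (induction A rule: finite_induct)
  case empty thus ?case by simp
next
  case (insert x F)
  thus ?case by (simp add: rep_plus)
qed

lemma img_range_inj:
  fixes F :: "'u::finite \<Rightarrow> 'v"
  assumes "inj F"
  shows "image_mset g (mset_set (range F)) = (\<Sum>u\<in>UNIV. {#g (F u)#})"
proof -
  have "mset_set (range F) = image_mset F (mset_set UNIV)"
    using image_mset_mset_set[of F UNIV] assms by simp
  hence "image_mset g (mset_set (range F)) = image_mset (g \<circ> F) (mset_set UNIV)"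
    by (simp add: image_mset.compositionality)
  also have "\<dots> = (\<Sum>u\<in>UNIV. {#g (F u)#})" by (simp add: image_mset_mset_set_sum)
  finally show ?thesis .
qed

lemma sum_triple_split:
  fixes f :: "'k::{finite,zero} \<times> 'b::{finite,zero} \<times> 'k \<Rightarrow> 'm::comm_monoid_add"
  shows "(\<Sum>u\<in>UNIV. f u) = (\<Sum>c\<in>UNIV. f (0, 0, c)) + (\<Sum>u\<in>{u. fst (snd u) \<noteq> 0}. f u)
           + (\<Sum>c\<in>UNIV. \<Sum>a\<in>UNIV - {0}. f (a, 0, c))"
proof -
  let ?A0 = "(\<lambda>c. (0::'k, 0::'b, c)) ` UNIV"
  let ?A1 = "{u::'k \<times> 'b \<times> 'k. fst (snd u) \<noteq> 0}"
  let ?A2 = "(\<lambda>(a, c). (a, 0::'b, c)) ` ((UNIV - {0::'k}) \<times> (UNIV::'k set))"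
  have U: "UNIV = ?A0 \<union> ?A1 \<union> ?A2"
  proof (rule set_eqI)
    fix u :: "'k \<times> 'b \<times> 'k"
    obtain a b c where u: "u = (a, b, c)" by (cases u) auto
    show "u \<in> UNIV \<longleftrightarrow> u \<in> ?A0 \<union> ?A1 \<union> ?A2"
    proof (cases "b = 0")
      case True
      show ?thesis
      proof (cases "a = 0")
        case True thus ?thesis using u \<open>b = 0\<close> by auto
      next
        case False
        hence "u \<in> ?A2" using u \<open>b = 0\<close> by (auto simp: image_iff)
        thus ?thesis by simp
      qed
    next
      case False thus ?thesis using u by auto
    qed
  qed
  have d1: "?A0 \<inter> ?A1 = {}" by auto
  have d2: "(?A0 \<union> ?A1) \<inter> ?A2 = {}" by auto
  have "(\<Sum>u\<in>UNIV. f u) = (\<Sum>u\<in>?A0 \<union> ?A1 \<union> ?A2. f u)" using U by simp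
  also have "\<dots> = (\<Sum>u\<in>?A0. f u) + (\<Sum>u\<in>?A1. f u) + (\<Sum>u\<in>?A2. f u)"
    using d1 d2 by (simp add: sum.union_disjoint)
  also have "(\<Sum>u\<in>?A0. f u) = (\<Sum>c\<in>UNIV. f (0, 0, c))"
    by (subst sum.reindex) (auto simp: inj_on_def)
  also have "(\<Sum>u\<in>?A2. f u) = (\<Sum>(a, c)\<in>(UNIV - {0::'k}) \<times> (UNIV::'k set). f (a, 0, c))"
    by (subst sum.reindex) (auto simp: inj_on_def intro!: sum.cong split: prod.splits)
  also have "\<dots> = (\<Sum>a\<in>UNIV - {0::'k}. \<Sum>c\<in>UNIV. f (a, 0, c))"
    by (simp add: sum.cartesian_product)
  also have "\<dots> = (\<Sum>c\<in>UNIV. \<Sum>a\<in>UNIV - {0::'k}. f (a, 0, c))"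
    by (rule sum.swap)
  finally show ?thesis .
qed

lemma card_A1:
  "card {u::'k::{finite,zero} \<times> 'b::{finite,zero} \<times> 'k. fst (snd u) \<noteq> 0} = CARD('k) * (CARD('b) - 1) * CARD('k)"
proof -
  have "{u::'k \<times> 'b \<times> 'k. fst (snd u) \<noteq> 0} = UNIV \<times> (UNIV - {0}) \<times> UNIV" by auto
  thus ?thesis by (simp add: card_cartesian_product card_Diff_singleton)
qed

lemma sum_split_zero:
  fixes f :: "'k::{finite,zero} \<Rightarrow> 'm::comm_monoid_add"
  shows "(\<Sum>c\<in>UNIV. f c) = f 0 + (\<Sum>c\<in>UNIV - {0}. f c)"
  by (simp add: sum.remove[of UNIV 0])




lemma split_sign:
  fixes g :: "'k::{finite,field} \<Rightarrow> 'v"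
  assumes two: "(2::'k) \<noteq> 0" and oddq: "odd CARD('k)" and d: "d = 1 \<or> d = -1"
    and gX: "\<And>a. a \<noteq> 0 \<Longrightarrow> qchar a * d = 1 \<Longrightarrow> g a = X"
    and gY: "\<And>a. a \<noteq> 0 \<Longrightarrow> qchar a * d = -1 \<Longrightarrow> g a = Y"
  shows "(\<Sum>a\<in>UNIV - {0}. {#g a#}) = replicate_mset ((CARD('k) - 1) div 2) X + replicate_mset ((CARD('k) - 1) div 2) Y"
proof -
  let ?A = "{a::'k. qchar a * d = 1}" and ?B = "{a::'k. qchar a * d = -1}"
  have U: "UNIV - {0} = ?A \<union> ?B"
  proof
    show "UNIV - {0} \<subseteq> ?A \<union> ?B" using qchar_nz d by fastforce
    show "?A \<union> ?B \<subseteq> UNIV - {0}" by auto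
  qed
  have dj: "?A \<inter> ?B = {}" by auto
  have cA: "card ?A = (CARD('k) - 1) div 2" and cB: "card ?B = (CARD('k) - 1) div 2"
  proof -
    have "?A = (if d = 1 then {a. qchar a = 1} else {a. qchar a = -1})" using d by auto
    thus "card ?A = (CARD('k) - 1) div 2" using card_sq_nsq[OF two oddq] by simp
    have "?B = (if d = 1 then {a. qchar a = -1} else {a. qchar a = 1})" using d by auto
    thus "card ?B = (CARD('k) - 1) div 2" using card_sq_nsq[OF two oddq] by simp
  qed
  have "(\<Sum>a\<in>UNIV - {0}. {#g a#}) = (\<Sum>a\<in>?A. {#g a#}) + (\<Sum>a\<in>?B. {#g a#})"
    unfolding U using dj by (simp add: sum.union_disjoint)
  also have "(\<Sum>a\<in>?A. {#g a#}) = replicate_mset (card ?A) X"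
  proof (rule msum_const)
    show "\<forall>a\<in>?A. g a = X"
    proof
      fix a assume a: "a \<in> ?A"
      hence "a \<noteq> 0" by (cases "a = 0") auto
      thus "g a = X" using a gX by auto
    qed
  qed simp
  also have "(\<Sum>a\<in>?B. {#g a#}) = replicate_mset (card ?B) Y"
  proof (rule msum_const)
    show "\<forall>a\<in>?B. g a = Y"
    proof
      fix a assume a: "a \<in> ?B"
      hence "a \<noteq> 0" by (cases "a = 0") auto
      thus "g a = Y" using a gY by auto
    qed
  qed simp
  finally show ?thesis using cA cB by simp
qed

lemma qchar_pow:
  assumes "(2::'k::{finite,field}) \<noteq> 0" "odd CARD('k)"
  shows "qchar ((x::'k) ^ n) = qchar x ^ n"
  by (induction n) (simp_all add: qchar_mult[OF assms])

lemma R_even: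
  fixes q E X :: real
  assumes q: "q > 0" and m2: "m2 \<ge> 1" and r: "r = 2 * k" and rm: "r \<le> m1"
  shows "q ^ m2 * (q ^ (m1 - r) * (q ^ (2 * k) + E * q ^ k * X) / q) =
         q ^ (m1 + m2 - 1) * (1 + E * X * q powr (- real r / 2))"
proof -
  obtain d where d: "m1 = 2 * k + d" using rm r le_Suc_ex by blast
  obtain n where n: "m2 = Suc n" using m2 by (metis Suc_le_D One_nat_def)
  have pw: "q powr (- real r / 2) = inverse (q ^ k)"
    using q r by (simp add: powr_minus powr_realpow[symmetric])
  have e1: "m1 - r = d" using d r by simp
  have e2: "m1 + m2 - 1 = 2 * k + d + n" using d n by simp
  show ?thesis unfolding pw unfolding d n r using q
    by (simp add: field_simps power_add mult_2 mult_2_right)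
qed

lemma R_odd:
  fixes q F Y :: real
  assumes q: "q > 0" and m2: "m2 \<ge> 1" and r: "r = 2 * k + 1" and rm: "r \<le> m1"
  shows "q ^ m2 * (q ^ (m1 - r) * (q ^ (2 * k) + F * q ^ k * Y)) =
         q ^ (m1 + m2 - 1) * (1 + F * Y * q powr ((1 - real r) / 2))"
proof -
  obtain d where d: "m1 = 2 * k + 1 + d" using rm r le_Suc_ex by blast
  obtain n where n: "m2 = Suc n" using m2 by (metis Suc_le_D One_nat_def)
  have pw: "q powr ((1 - real r) / 2) = inverse (q ^ k)"
    using q r by (simp add: powr_minus powr_realpow[symmetric])
  have e1: "m1 - r = d" using d r by simp
  have e2: "m1 + m2 - 1 = 2 * k + d + 1 + n" using d n by simp
  show ?thesis unfolding pw unfolding d n r using q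
    by (simp add: field_simps power_add mult_2 mult_2_right)
qed




context
  fixes e2 :: "'k::{finite,field} \<Rightarrow> 'b::{finite,field}" and Q :: "'a::{finite,zero} \<Rightarrow> 'k" and Tf :: "'b \<Rightarrow> 'k"
    and q m1 m2 :: nat
  assumes emb2: "field_emb e2"
    and T_add: "\<And>x y. Tf (x + y) = Tf x + Tf y"
    and T_scale: "\<And>a y. Tf (e2 a * y) = a * Tf y"
    and T_fib: "\<And>b c. b \<noteq> 0 \<Longrightarrow> card {y. Tf (b * y) = c} = q ^ (m2 - 1)"
    and T_nz: "\<exists>y. Tf y \<noteq> 0"
    and Q0: "Q 0 = 0" and Qnz: "\<exists>x. Q x \<noteq> 0"
    and cardk: "CARD('k) = q" and carda: "CARD('a) = q ^ m1" and cardb: "CARD('b) = q ^ m2"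
    and m2: "m2 \<ge> 1"
    and two: "(2::'k) \<noteq> 0" and oddq: "odd CARD('k)"
begin

lemmas cb = count_b[OF emb2 T_add T_scale T_fib T_nz Q0 Qnz cardk carda cardb m2]
lemmas c0 = count_0[OF emb2 T_add T_scale T_fib T_nz Q0 Qnz cardk carda cardb m2]
lemmas ca = count_a[OF emb2 T_add T_scale T_fib T_nz Q0 Qnz cardk carda cardb m2]
lemmas cwinj = cw_inj[OF emb2 T_add T_scale T_fib T_nz Q0 Qnz cardk carda cardb m2]

lemma q_pos: "q > 0" using cardk finite_UNIV_card_ge_0[where 'a='k] by simp

lemma hw: "real (hweight f) = real q ^ (m1 + m2) - real (card {z::'a \<times> 'b. f z = (0::'k)})"
proof -
  have "{z. f z \<noteq> 0} = UNIV - {z. f z = 0}" by auto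
  hence "hweight f = CARD('a \<times> 'b) - card {z. f z = 0}"
    unfolding hweight_def by (simp add: card_Diff_subset)
  moreover have "card {z. f z = 0} \<le> CARD('a \<times> 'b)" by (rule card_mono) auto
  moreover have "CARD('a \<times> 'b) = q ^ (m1 + m2)" using carda cardb by (simp add: power_add)
  ultimately show ?thesis by (simp add: of_nat_diff)
qed

abbreviation Fc where "Fc \<equiv> (\<lambda>(a, b, c). cw Tf Q a b c)"

definition vec where "vec u = (\<lambda>w. real (card {z. Fc u z = w}))"

lemma wdist_sum: "wdist (range Fc) = (\<Sum>u\<in>UNIV. {#real q ^ (m1 + m2) - vec u 0#})"
  unfolding wdist_def by (simp add: img_range_inj[OF cwinj] hw vec_def)

lemma cwe_sum: "cwe (range Fc) = (\<Sum>u\<in>UNIV. {#vec u#})"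
  unfolding cwe_def by (simp add: img_range_inj[OF cwinj] vec_def)

lemma vec1: "b \<noteq> 0 \<Longrightarrow> vec (a, b, c) = (\<lambda>w. real q ^ (m1 + m2 - 1))"
  by (simp add: vec_def cb)

lemma vec0: "vec (0, 0, c) = (\<lambda>w. if w = c then real q ^ (m1 + m2) else 0)"
  by (auto simp: vec_def c0)

lemma vec2: "a \<noteq> 0 \<Longrightarrow> vec (a, 0, c) = (\<lambda>w. real q ^ m2 * real (card {x. Q x = (w - c) / a}))"
  by (simp add: vec_def ca)

lemma card_A1': "card {u::'k \<times> 'b \<times> 'k. fst (snd u) \<noteq> 0} = q ^ 2 * (q ^ m2 - 1)"
  using card_A1[where 'k='k and 'b='b] cardk cardb by (simp add: power2_eq_square mult_ac)

lemma card_nz: "card (UNIV - {0::'k}) = q - 1"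
  using cardk by (simp add: card_Diff_singleton)


lemma core_even:
  fixes E :: real
  assumes r: "r = 2 * k" and rm: "r \<le> m1"
    and N: "\<And>t. real q * real (card {x. Q x = t}) =
              real q ^ (m1 - r) * (real q ^ (2 * k) + E * real q ^ k * (if t = 0 then real q - 1 else -1))"
  shows "wdist (range Fc) = {#0#}
              + replicate_mset (q - 1) (real q ^ (m1 + m2))
              + replicate_mset (q^2 * (q^m2 - 1)) (real q ^ (m1 + m2 - 1) * (real q - 1))
              + replicate_mset (q - 1) (real q ^ (m1 + m2 - 1) * (real q - 1) * (1 - E * real q powr (- real r / 2)))
              + replicate_mset ((q - 1)^2) (real q ^ (m1 + m2 - 1) * (real q - 1 + E * real q powr (- real r / 2)))
         \<and> cwe (range Fc) = (\<Sum>i\<in>UNIV. {# (\<lambda>w. if w = i then real q ^ (m1 + m2) else 0) #})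
              + replicate_mset (q^2 * (q^m2 - 1)) (\<lambda>w. real q ^ (m1 + m2 - 1))
              + (\<Sum>i\<in>UNIV. replicate_mset (q - 1)
                   (\<lambda>w. if w = i then real q ^ (m1 + m2 - 1) * (1 + E * (real q - 1) * real q powr (- real r / 2))
                        else real q ^ (m1 + m2 - 1) * (1 - E * real q powr (- real r / 2))))"
    (is "wdist (range Fc) = ?X \<and> cwe (range Fc) = ?Y")
proof -
  let ?qr = "real q" and ?M = "m1 + m2"
  let ?pw = "?qr powr (- real r / 2)"
  let ?t1 = "?qr ^ (?M - 1) * (1 + E * (?qr - 1) * ?pw)"
  let ?t2 = "?qr ^ (?M - 1) * (1 - E * ?pw)"
  have qp: "?qr > 0" using q_pos by simp
  have qM: "?qr ^ ?M = ?qr ^ (?M - 1) * ?qr" using m2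
    by (metis add_gr_0 less_le_trans mult.commute power_minus_mult zero_less_one)
  have Nr: "real (card {x. Q x = t}) = ?qr ^ (m1 - r) * (?qr ^ (2 * k) + E * ?qr ^ k * (if t = 0 then ?qr - 1 else -1)) / ?qr" for t
    using N[of t] qp by (simp add: field_simps)
  have v2: "vec (a, 0, c) = (\<lambda>w. if w = c then ?t1 else ?t2)" if a: "a \<noteq> 0" for a c
  proof
    fix w
    have "vec (a, 0, c) w = ?qr ^ m2 * real (card {x. Q x = (w - c) / a})" using vec2[OF a] by simp
    also have "\<dots> = ?qr ^ m2 * (?qr ^ (m1 - r) * (?qr ^ (2 * k) + E * ?qr ^ k * (if (w - c) / a = 0 then ?qr - 1 else -1)) / ?qr)"
      by (simp only: Nr)
    also have "\<dots> = ?qr ^ (?M - 1) * (1 + E * (if (w - c) / a = 0 then ?qr - 1 else -1) * ?pw)"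
      by (rule R_even[OF qp m2 r rm])
    also have "\<dots> = (if w = c then ?t1 else ?t2)" using a by (simp add: algebra_simps)
    finally show "vec (a, 0, c) w = (if w = c then ?t1 else ?t2)" .
  qed
  have sA1: "(\<Sum>u\<in>{u::'k \<times> 'b \<times> 'k. fst (snd u) \<noteq> 0}. {#g (vec u)#}) = replicate_mset (q^2 * (q^m2 - 1)) (g (\<lambda>w. ?qr ^ (?M - 1)))" for g
  proof -
    have "(\<Sum>u\<in>{u::'k \<times> 'b \<times> 'k. fst (snd u) \<noteq> 0}. {#g (vec u)#}) = replicate_mset (card {u::'k \<times> 'b \<times> 'k. fst (snd u) \<noteq> 0}) (g (\<lambda>w. ?qr ^ (?M - 1)))"
      by (rule msum_const) (auto simp: vec1)
    thus ?thesis by (simp only: card_A1')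
  qed
  have sA2: "(\<Sum>c\<in>UNIV. \<Sum>a\<in>UNIV - {0::'k}. {#g (vec (a, 0, c)) c#}) = (\<Sum>c\<in>UNIV. replicate_mset (q - 1) (g (\<lambda>w. if w = c then ?t1 else ?t2) c))"
    for g :: "('k \<Rightarrow> real) \<Rightarrow> 'k \<Rightarrow> real"
  proof (rule sum.cong[OF refl])
    fix c :: 'k
    have "(\<Sum>a\<in>UNIV - {0::'k}. {#g (vec (a, 0, c)) c#}) = replicate_mset (card (UNIV - {0::'k})) (g (\<lambda>w. if w = c then ?t1 else ?t2) c)"
      by (rule msum_const) (auto simp: v2)
    thus "(\<Sum>a\<in>UNIV - {0::'k}. {#g (vec (a, 0, c)) c#}) = replicate_mset (q - 1) (g (\<lambda>w. if w = c then ?t1 else ?t2) c)"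
      by (simp only: card_nz)
  qed
  have sA2c: "(\<Sum>c\<in>UNIV. \<Sum>a\<in>UNIV - {0::'k}. {#g (vec (a, 0, c)) c#}) = (\<Sum>c\<in>UNIV. replicate_mset (q - 1) (g (\<lambda>w. if w = c then ?t1 else ?t2) c))"
    for g :: "('k \<Rightarrow> real) \<Rightarrow> 'k \<Rightarrow> ('k \<Rightarrow> real)"
  proof (rule sum.cong[OF refl])
    fix c :: 'k
    have "(\<Sum>a\<in>UNIV - {0::'k}. {#g (vec (a, 0, c)) c#}) = replicate_mset (card (UNIV - {0::'k})) (g (\<lambda>w. if w = c then ?t1 else ?t2) c)"
      by (rule msum_const) (auto simp: v2)
    thus "(\<Sum>a\<in>UNIV - {0::'k}. {#g (vec (a, 0, c)) c#}) = replicate_mset (q - 1) (g (\<lambda>w. if w = c then ?t1 else ?t2) c)"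
      by (simp only: card_nz)
  qed
  have W: "wdist (range Fc) = ?X"
  proof -
    have "wdist (range Fc) = (\<Sum>c\<in>UNIV. {#?qr ^ ?M - vec (0, 0, c) 0#})
       + (\<Sum>u\<in>{u::'k \<times> 'b \<times> 'k. fst (snd u) \<noteq> 0}. {#?qr ^ ?M - vec u 0#})
       + (\<Sum>c\<in>UNIV. \<Sum>a\<in>UNIV - {0::'k}. {#?qr ^ ?M - vec (a, 0, c) 0#})"
      unfolding wdist_sum by (rule sum_triple_split)
    also have "(\<Sum>c\<in>UNIV. {#?qr ^ ?M - vec (0, 0, c) 0#}) = {#0#} + replicate_mset (q - 1) (?qr ^ ?M)"
    proof -
      have "(\<Sum>c\<in>UNIV. {#?qr ^ ?M - vec (0, 0, c) 0#}) = {#?qr ^ ?M - vec (0, 0, 0) 0#} + (\<Sum>c\<in>UNIV - {0}. {#?qr ^ ?M - vec (0, 0, c) 0#})"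
        by (rule sum_split_zero)
      also have "(\<Sum>c\<in>UNIV - {0}. {#?qr ^ ?M - vec (0, 0, c) 0#}) = replicate_mset (card (UNIV - {0::'k})) (?qr ^ ?M)"
        by (rule msum_const) (auto simp: vec0)
      finally show ?thesis by (simp add: vec0 card_nz)
    qed
    also have "(\<Sum>u\<in>{u::'k \<times> 'b \<times> 'k. fst (snd u) \<noteq> 0}. {#?qr ^ ?M - vec u 0#}) = replicate_mset (q^2 * (q^m2 - 1)) (?qr ^ (?M - 1) * (?qr - 1))"
      using sA1[of "\<lambda>f. ?qr ^ ?M - f 0"] qM by (simp add: algebra_simps)
    also have "(\<Sum>c\<in>UNIV. \<Sum>a\<in>UNIV - {0::'k}. {#?qr ^ ?M - vec (a, 0, c) 0#})
       = replicate_mset (q - 1) (?qr ^ (?M - 1) * (?qr - 1) * (1 - E * ?pw))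
       + replicate_mset ((q - 1)^2) (?qr ^ (?M - 1) * (?qr - 1 + E * ?pw))"
    proof -
      have "(\<Sum>c\<in>UNIV. \<Sum>a\<in>UNIV - {0::'k}. {#?qr ^ ?M - vec (a, 0, c) 0#})
          = (\<Sum>c\<in>(UNIV::'k set). replicate_mset (q - 1) (?qr ^ ?M - (if 0 = c then ?t1 else ?t2)))"
      proof (rule sum.cong[OF refl])
        fix c :: 'k
        have "(\<Sum>a\<in>UNIV - {0::'k}. {#?qr ^ ?M - vec (a, 0, c) 0#}) = replicate_mset (card (UNIV - {0::'k})) (?qr ^ ?M - (if 0 = c then ?t1 else ?t2))"
          by (rule msum_const) (auto simp: v2)
        thus "(\<Sum>a\<in>UNIV - {0::'k}. {#?qr ^ ?M - vec (a, 0, c) 0#}) = replicate_mset (q - 1) (?qr ^ ?M - (if 0 = c then ?t1 else ?t2))"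
          by (simp only: card_nz)
      qed
      also have "\<dots> = replicate_mset (q - 1) (?qr ^ ?M - ?t1) + (\<Sum>c\<in>UNIV - {0::'k}. replicate_mset (q - 1) (?qr ^ ?M - (if 0 = c then ?t1 else ?t2)))"
        by (subst sum_split_zero) simp
      also have "(\<Sum>c\<in>UNIV - {0::'k}. replicate_mset (q - 1) (?qr ^ ?M - (if 0 = c then ?t1 else ?t2)))
          = (\<Sum>c\<in>UNIV - {0::'k}. replicate_mset (q - 1) (?qr ^ ?M - ?t2))"
        by (rule sum.cong) auto
      also have "\<dots> = replicate_mset ((q - 1)^2) (?qr ^ ?M - ?t2)"
        by (simp add: msum_rep card_nz power2_eq_square)
      also have "?qr ^ ?M - ?t1 = ?qr ^ (?M - 1) * (?qr - 1) * (1 - E * ?pw)" unfolding qM by (simp add: algebra_simps)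
      also have "?qr ^ ?M - ?t2 = ?qr ^ (?M - 1) * (?qr - 1 + E * ?pw)" unfolding qM by (simp add: algebra_simps)
      finally show ?thesis .
    qed
    finally show ?thesis by (simp add: add.assoc)
  qed
  have C: "cwe (range Fc) = ?Y"
  proof -
    have "cwe (range Fc) = (\<Sum>c\<in>UNIV. {#vec (0, 0, c)#})
       + (\<Sum>u\<in>{u::'k \<times> 'b \<times> 'k. fst (snd u) \<noteq> 0}. {#vec u#})
       + (\<Sum>c\<in>UNIV. \<Sum>a\<in>UNIV - {0::'k}. {#vec (a, 0, c)#})"
      unfolding cwe_sum by (rule sum_triple_split)
    also have "(\<Sum>u\<in>{u::'k \<times> 'b \<times> 'k. fst (snd u) \<noteq> 0}. {#vec u#}) = replicate_mset (q^2 * (q^m2 - 1)) (\<lambda>w. ?qr ^ (?M - 1))"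
      using sA1[of "\<lambda>f. f"] by simp
    also have "(\<Sum>c\<in>UNIV. \<Sum>a\<in>UNIV - {0::'k}. {#vec (a, 0, c)#}) = (\<Sum>c\<in>UNIV. replicate_mset (q - 1) (\<lambda>w. if w = c then ?t1 else ?t2))"
      by (rule sA2c[of "\<lambda>f c. f"])
    finally show ?thesis by (simp add: vec0)
  qed
  show ?thesis using W C by blast
qed


lemma pm1_cases: "(x::int) = 1 \<or> x = -1 \<Longrightarrow> x * x = 1" by auto

lemma core_odd:
  fixes Fi ei :: int
  assumes r: "r = 2 * k + 1" and rm: "r \<le> m1" and Fi: "Fi = 1 \<or> Fi = -1" and ei: "ei = 1 \<or> ei = -1"
    and N: "\<And>t. real (card {x. Q x = t}) =
              real q ^ (m1 - r) * (real q ^ (2 * k) + real_of_int Fi * real q ^ k * real_of_int (qchar t))"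
  shows "wdist (range Fc) = {#0#}
              + replicate_mset (q - 1) (real q ^ (m1 + m2))
              + replicate_mset (q^2 * (q^m2 - 1) + (q - 1)) (real q ^ (m1 + m2 - 1) * (real q - 1))
              + replicate_mset ((q - 1)^2 div 2) (real q ^ (m1 + m2 - 1) * (real q - 1 - real_of_int ei * real q powr ((1 - real r) / 2)))
              + replicate_mset ((q - 1)^2 div 2) (real q ^ (m1 + m2 - 1) * (real q - 1 + real_of_int ei * real q powr ((1 - real r) / 2)))
         \<and> cwe (range Fc) = (\<Sum>i\<in>UNIV. {# (\<lambda>w. if w = i then real q ^ (m1 + m2) else 0) #})
              + replicate_mset (q^2 * (q^m2 - 1)) (\<lambda>w. real q ^ (m1 + m2 - 1))
              + (\<Sum>i\<in>UNIV. replicate_mset ((q - 1) div 2)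
                   (\<lambda>w. if w = i then real q ^ (m1 + m2 - 1)
                        else real q ^ (m1 + m2 - 1) * (1 + real_of_int ei * real q powr ((1 - real r) / 2) * real_of_int (qchar (i - w)))))
              + (\<Sum>i\<in>UNIV. replicate_mset ((q - 1) div 2)
                   (\<lambda>w. if w = i then real q ^ (m1 + m2 - 1)
                        else real q ^ (m1 + m2 - 1) * (1 - real_of_int ei * real q powr ((1 - real r) / 2) * real_of_int (qchar (i - w)))))"
    (is "wdist (range Fc) = ?X \<and> cwe (range Fc) = ?Y")
proof -
  let ?qr = "real q" and ?M = "m1 + m2"
  let ?pw = "?qr powr ((1 - real r) / 2)"
  let ?h = "(q - 1) div 2"
  let ?e1 = "qchar (-1::'k)"
  have qp: "?qr > 0" using q_pos by simp
  have qM: "?qr ^ ?M = ?qr ^ (?M - 1) * ?qr" using m2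
    by (metis add_gr_0 less_le_trans mult.commute power_minus_mult zero_less_one)
  have e1: "?e1 = 1 \<or> ?e1 = -1" using qchar_nz[of "-1::'k"] by simp
  have qa: "a \<noteq> 0 \<Longrightarrow> qchar (a::'k) = 1 \<or> qchar a = -1" for a using qchar_nz by blast
  have v2: "vec (a, 0, c) = (\<lambda>w. ?qr ^ (?M - 1) * (1 + real_of_int Fi * real_of_int (qchar a * qchar (w - c)) * ?pw))"
    if a: "a \<noteq> 0" for a c
  proof
    fix w
    have qq: "qchar ((w - c) / a) = qchar a * qchar (w - c)"
      by (simp add: divide_inverse qchar_mult[OF two oddq] qchar_inverse[OF two oddq] mult.commute)
    have "vec (a, 0, c) w = ?qr ^ m2 * real (card {x. Q x = (w - c) / a})" using vec2[OF a] by simp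
    also have "\<dots> = ?qr ^ m2 * (?qr ^ (m1 - r) * (?qr ^ (2 * k) + real_of_int Fi * ?qr ^ k * real_of_int (qchar ((w - c) / a))))"
      by (simp only: N)
    also have "\<dots> = ?qr ^ (?M - 1) * (1 + real_of_int Fi * real_of_int (qchar ((w - c) / a)) * ?pw)"
      by (rule R_odd[OF qp m2 r rm])
    finally show "vec (a, 0, c) w = ?qr ^ (?M - 1) * (1 + real_of_int Fi * real_of_int (qchar a * qchar (w - c)) * ?pw)"
      by (simp only: qq)
  qed
  have sA1: "(\<Sum>u\<in>{u::'k \<times> 'b \<times> 'k. fst (snd u) \<noteq> 0}. {#g (vec u)#}) = replicate_mset (q^2 * (q^m2 - 1)) (g (\<lambda>w. ?qr ^ (?M - 1)))" for g
  proof -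
    have "(\<Sum>u\<in>{u::'k \<times> 'b \<times> 'k. fst (snd u) \<noteq> 0}. {#g (vec u)#}) = replicate_mset (card {u::'k \<times> 'b \<times> 'k. fst (snd u) \<noteq> 0}) (g (\<lambda>w. ?qr ^ (?M - 1)))"
      by (rule msum_const) (auto simp: vec1)
    thus ?thesis by (simp only: card_A1')
  qed
  have hq: "(q - 1) * ?h = (q - 1)^2 div 2"
  proof -
    have "even (q - 1)" using oddq cardk q_pos by simp
    then obtain j where "q - 1 = 2 * j" by (rule evenE)
    thus ?thesis by (simp add: power2_eq_square)
  qed
  have W: "wdist (range Fc) = ?X"
  proof -
    have "wdist (range Fc) = (\<Sum>c\<in>UNIV. {#?qr ^ ?M - vec (0, 0, c) 0#})
       + (\<Sum>u\<in>{u::'k \<times> 'b \<times> 'k. fst (snd u) \<noteq> 0}. {#?qr ^ ?M - vec u 0#})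
       + (\<Sum>c\<in>UNIV. \<Sum>a\<in>UNIV - {0::'k}. {#?qr ^ ?M - vec (a, 0, c) 0#})"
      unfolding wdist_sum by (rule sum_triple_split)
    also have "(\<Sum>c\<in>UNIV. {#?qr ^ ?M - vec (0, 0, c) 0#}) = {#0#} + replicate_mset (q - 1) (?qr ^ ?M)"
    proof -
      have "(\<Sum>c\<in>UNIV. {#?qr ^ ?M - vec (0, 0, c) 0#}) = {#?qr ^ ?M - vec (0, 0, 0) 0#} + (\<Sum>c\<in>UNIV - {0}. {#?qr ^ ?M - vec (0, 0, c) 0#})"
        by (rule sum_split_zero)
      also have "(\<Sum>c\<in>UNIV - {0}. {#?qr ^ ?M - vec (0, 0, c) 0#}) = replicate_mset (card (UNIV - {0::'k})) (?qr ^ ?M)"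
        by (rule msum_const) (auto simp: vec0)
      finally show ?thesis by (simp add: vec0 card_nz)
    qed
    also have "(\<Sum>u\<in>{u::'k \<times> 'b \<times> 'k. fst (snd u) \<noteq> 0}. {#?qr ^ ?M - vec u 0#}) = replicate_mset (q^2 * (q^m2 - 1)) (?qr ^ (?M - 1) * (?qr - 1))"
      using sA1[of "\<lambda>f. ?qr ^ ?M - f 0"] qM by (simp add: algebra_simps)
    also have "(\<Sum>c\<in>UNIV. \<Sum>a\<in>UNIV - {0::'k}. {#?qr ^ ?M - vec (a, 0, c) 0#})
       = replicate_mset (q - 1) (?qr ^ (?M - 1) * (?qr - 1))
       + (replicate_mset ((q - 1)^2 div 2) (?qr ^ (?M - 1) * (?qr - 1 - real_of_int ei * ?pw))
       + replicate_mset ((q - 1)^2 div 2) (?qr ^ (?M - 1) * (?qr - 1 + real_of_int ei * ?pw)))"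
    proof -
      have "(\<Sum>c\<in>UNIV. \<Sum>a\<in>UNIV - {0::'k}. {#?qr ^ ?M - vec (a, 0, c) 0#})
         = (\<Sum>a\<in>UNIV - {0::'k}. {#?qr ^ ?M - vec (a, 0, 0) 0#}) + (\<Sum>c\<in>UNIV - {0::'k}. \<Sum>a\<in>UNIV - {0::'k}. {#?qr ^ ?M - vec (a, 0, c) 0#})"
        by (rule sum_split_zero)
      also have "(\<Sum>a\<in>UNIV - {0::'k}. {#?qr ^ ?M - vec (a, 0, 0) 0#}) = replicate_mset (card (UNIV - {0::'k})) (?qr ^ (?M - 1) * (?qr - 1))"
        by (rule msum_const) (auto simp: v2 qM algebra_simps)
      also have "(\<Sum>c\<in>UNIV - {0::'k}. \<Sum>a\<in>UNIV - {0::'k}. {#?qr ^ ?M - vec (a, 0, c) 0#})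
          = (\<Sum>c\<in>UNIV - {0::'k}. replicate_mset ?h (?qr ^ (?M - 1) * (?qr - 1 - real_of_int ei * ?pw))
                                  + replicate_mset ?h (?qr ^ (?M - 1) * (?qr - 1 + real_of_int ei * ?pw)))"
      proof (rule sum.cong[OF refl])
        fix c :: 'k assume "c \<in> UNIV - {0}"
        hence c: "c \<noteq> 0" by simp
        have qc: "qchar (0 - c) = 1 \<or> qchar (0 - c) = -1" using qchar_nz[of "0 - c"] c by simp
        show "(\<Sum>a\<in>UNIV - {0::'k}. {#?qr ^ ?M - vec (a, 0, c) 0#}) =
              replicate_mset ?h (?qr ^ (?M - 1) * (?qr - 1 - real_of_int ei * ?pw))
            + replicate_mset ?h (?qr ^ (?M - 1) * (?qr - 1 + real_of_int ei * ?pw))"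
        proof (rule split_sign[OF two oddq, where d = "Fi * qchar (0 - c) * ei", simplified cardk])
          show "Fi * qchar (0 - c) * ei = 1 \<or> Fi * qchar (0 - c) * ei = -1" using Fi ei qc by auto
        next
          fix a :: 'k assume a: "a \<noteq> 0" and s: "qchar a * (Fi * qchar (0 - c) * ei) = 1"
          have "Fi * (qchar a * qchar (0 - c)) = ei" using s Fi ei qc qa[OF a] by auto
          thus "?qr ^ ?M - vec (a, 0, c) 0 = ?qr ^ (?M - 1) * (?qr - 1 - real_of_int ei * ?pw)"
            unfolding v2[OF a] qM by (simp add: algebra_simps flip: of_int_mult)
        next
          fix a :: 'k assume a: "a \<noteq> 0" and s: "qchar a * (Fi * qchar (0 - c) * ei) = -1"
          have "Fi * (qchar a * qchar (0 - c)) = - ei" using s Fi ei qc qa[OF a] by auto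
          thus "?qr ^ ?M - vec (a, 0, c) 0 = ?qr ^ (?M - 1) * (?qr - 1 + real_of_int ei * ?pw)"
            unfolding v2[OF a] qM by (simp add: algebra_simps flip: of_int_mult)
        qed
      qed
      also have "\<dots> = replicate_mset ((q - 1)^2 div 2) (?qr ^ (?M - 1) * (?qr - 1 - real_of_int ei * ?pw))
                      + replicate_mset ((q - 1)^2 div 2) (?qr ^ (?M - 1) * (?qr - 1 + real_of_int ei * ?pw))"
        by (simp add: sum.distrib msum_rep card_nz hq[simplified])
      finally show ?thesis by (simp add: card_nz)
    qed
    finally show ?thesis by (simp add: add.assoc rep_plus)
  qed
  have C: "cwe (range Fc) = ?Y"
  proof -
    have "cwe (range Fc) = (\<Sum>c\<in>UNIV. {#vec (0, 0, c)#})
       + (\<Sum>u\<in>{u::'k \<times> 'b \<times> 'k. fst (snd u) \<noteq> 0}. {#vec u#})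
       + (\<Sum>c\<in>UNIV. \<Sum>a\<in>UNIV - {0::'k}. {#vec (a, 0, c)#})"
      unfolding cwe_sum by (rule sum_triple_split)
    also have "(\<Sum>u\<in>{u::'k \<times> 'b \<times> 'k. fst (snd u) \<noteq> 0}. {#vec u#}) = replicate_mset (q^2 * (q^m2 - 1)) (\<lambda>w. ?qr ^ (?M - 1))"
      using sA1[of "\<lambda>f. f"] by simp
    also have "(\<Sum>c\<in>UNIV. \<Sum>a\<in>UNIV - {0::'k}. {#vec (a, 0, c)#}) =
       (\<Sum>c\<in>(UNIV::'k set). replicate_mset ?h (\<lambda>w. if w = c then ?qr ^ (?M - 1)
                        else ?qr ^ (?M - 1) * (1 + real_of_int ei * ?pw * real_of_int (qchar (c - w))))
                 + replicate_mset ?h (\<lambda>w. if w = c then ?qr ^ (?M - 1)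
                        else ?qr ^ (?M - 1) * (1 - real_of_int ei * ?pw * real_of_int (qchar (c - w)))))"
    proof (rule sum.cong[OF refl])
      fix c :: 'k
      have cw: "qchar (c - w) = ?e1 * qchar (w - c)" for w
        using qchar_mult[OF two oddq, of "-1" "w - c"] by simp
      show "(\<Sum>a\<in>UNIV - {0::'k}. {#vec (a, 0, c)#}) =
            replicate_mset ?h (\<lambda>w. if w = c then ?qr ^ (?M - 1)
                        else ?qr ^ (?M - 1) * (1 + real_of_int ei * ?pw * real_of_int (qchar (c - w))))
          + replicate_mset ?h (\<lambda>w. if w = c then ?qr ^ (?M - 1)
                        else ?qr ^ (?M - 1) * (1 - real_of_int ei * ?pw * real_of_int (qchar (c - w))))"
      proof (rule split_sign[OF two oddq, where d = "Fi * ei * ?e1", simplified cardk])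
        show "Fi * ei * ?e1 = 1 \<or> Fi * ei * ?e1 = -1" using Fi ei e1 by auto
      next
        fix a :: 'k assume a: "a \<noteq> 0" and s: "qchar a * (Fi * ei * ?e1) = 1"
        have fa: "Fi * qchar a = ei * ?e1" using s Fi ei e1 qa[OF a] by auto
        show "vec (a, 0, c) = (\<lambda>w. if w = c then ?qr ^ (?M - 1)
                        else ?qr ^ (?M - 1) * (1 + real_of_int ei * ?pw * real_of_int (qchar (c - w))))"
        proof
          fix w
          have ii: "Fi * (qchar a * qchar (w - c)) = ei * (?e1 * qchar (w - c))"
          proof -
            have "Fi * (qchar a * qchar (w - c)) = (Fi * qchar a) * qchar (w - c)" by (simp only: mult.assoc)
            also have "\<dots> = (ei * ?e1) * qchar (w - c)" by (simp only: fa)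
            finally show ?thesis by (simp only: mult.assoc)
          qed
          have "real_of_int Fi * real_of_int (qchar a * qchar (w - c)) = real_of_int ei * real_of_int (qchar (c - w))"
            unfolding cw by (simp only: of_int_mult[symmetric] ii)
          thus "vec (a, 0, c) w = (if w = c then ?qr ^ (?M - 1)
                        else ?qr ^ (?M - 1) * (1 + real_of_int ei * ?pw * real_of_int (qchar (c - w))))"
            unfolding v2[OF a] by (auto simp: algebra_simps)
        qed
      next
        fix a :: 'k assume a: "a \<noteq> 0" and s: "qchar a * (Fi * ei * ?e1) = -1"
        have fa: "Fi * qchar a = - (ei * ?e1)" using s Fi ei e1 qa[OF a] by auto
        show "vec (a, 0, c) = (\<lambda>w. if w = c then ?qr ^ (?M - 1)
                        else ?qr ^ (?M - 1) * (1 - real_of_int ei * ?pw * real_of_int (qchar (c - w))))"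
        proof
          fix w
          have ii: "Fi * (qchar a * qchar (w - c)) = - (ei * (?e1 * qchar (w - c)))"
          proof -
            have "Fi * (qchar a * qchar (w - c)) = (Fi * qchar a) * qchar (w - c)" by (simp only: mult.assoc)
            also have "\<dots> = - (ei * ?e1) * qchar (w - c)" by (simp only: fa)
            finally show ?thesis by (simp only: mult.assoc mult_minus_left)
          qed
          have "real_of_int Fi * real_of_int (qchar a * qchar (w - c)) = - (real_of_int ei * real_of_int (qchar (c - w)))"
            unfolding cw by (simp only: of_int_mult[symmetric] ii of_int_minus)
          thus "vec (a, 0, c) w = (if w = c then ?qr ^ (?M - 1)
                        else ?qr ^ (?M - 1) * (1 - real_of_int ei * ?pw * real_of_int (qchar (c - w))))"
            unfolding v2[OF a] by (auto simp: algebra_simps)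
        qed
      qed
    qed
    finally show ?thesis by (simp add: vec0 sum.distrib add.assoc)
  qed
  show ?thesis using W C by blast
qed

end




lemma sign_parity_aux:
  assumes "odd (p::nat)"
  shows "\<exists>A. p ^ m = 2 * A + 1 \<and> even (A + ((p - 1) div 2) * m)"
proof (induction m)
  case 0 show ?case by simp
next
  case (Suc m)
  then obtain A where A: "p ^ m = 2 * A + 1" "even (A + ((p - 1) div 2) * m)" by blast
  obtain j where j: "p = 2 * j + 1" using assms oddE by blast
  have "p ^ Suc m = 2 * (2 * j * A + j + A) + 1" using A(1) j by (simp add: algebra_simps)
  moreover have "even ((2 * j * A + j + A) + ((p - 1) div 2) * Suc m)" using A(2) j by simp
  ultimately show ?case by blast
qed

lemma sign_parity:
  assumes "odd (p::nat)"
  shows "(-1::int) ^ ((p - 1) * m * (2 * k) div 4) = ((-1) ^ ((p ^ m - 1) div 2)) ^ k"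
proof -
  obtain A where A: "p ^ m = 2 * A + 1" "even (A + ((p - 1) div 2) * m)" using sign_parity_aux[OF assms] by blast
  obtain j where j: "p = 2 * j + 1" using assms oddE by blast
  have d: "(p - 1) * m * (2 * k) div 4 = j * m * k" using j by simp
  have h: "(p ^ m - 1) div 2 = A" using A(1) by simp
  have "even (A * k + j * m * k)" using A(2) j by (simp add: algebra_simps) (metis add_mult_distrib even_mult_iff)
  hence "(-1::int) ^ (j * m * k) = (-1) ^ (A * k)"
    by (auto simp: minus_one_power_iff)
  thus ?thesis unfolding d h by (simp add: power_mult)
qed

theorem theorem3:
  fixes p m m1 m2 q :: nat
    and e1 :: "'k::{finite,field} \<Rightarrow> 'a::{finite,field}"
    and e2 :: "'k \<Rightarrow> 'b::{finite,field}"
    and Q :: "'a \<Rightarrow> 'k"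
  assumes "prime p" and "odd p" and "m \<ge> 1" and "q = p ^ m"
    and "CARD('k) = q"
    and "m1 \<ge> 1" and "m2 \<ge> 1"
    and "CARD('a) = q ^ m1" and "CARD('b) = q ^ m2"
    and "field_emb e1" and "field_emb e2"
    and "quad_form e1 Q" and "\<exists>x. Q x \<noteq> 0"
  shows
    "let M = m1 + m2; r = qf_rank e1 m1 Q; \<epsilon> = real_of_int (sgn_eps p m e1 m1 Q);
         C = codeQ e2 q m2 Q; qr = real q
     in CARD('a \<times> 'b) = q ^ M \<and>
        module.subspace (\<lambda>(a::'k) (f::'a \<times> 'b \<Rightarrow> 'k) z. a * f z) C \<and>
        vector_space.dim (\<lambda>(a::'k) (f::'a \<times> 'b \<Rightarrow> 'k) z. a * f z) C = m2 + 2 \<and>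
        (even r \<longrightarrow>
           wdist C = {#0#}
              + replicate_mset (q - 1) (qr ^ M)
              + replicate_mset (q^2 * (q^m2 - 1)) (qr ^ (M - 1) * (qr - 1))
              + replicate_mset (q - 1) (qr ^ (M - 1) * (qr - 1) * (1 - \<epsilon> * qr powr (- real r / 2)))
              + replicate_mset ((q - 1)^2) (qr ^ (M - 1) * (qr - 1 + \<epsilon> * qr powr (- real r / 2)))
         \<and> cwe C = (\<Sum>i\<in>UNIV. {# (\<lambda>w. if w = i then qr ^ M else 0) #})
              + replicate_mset (q^2 * (q^m2 - 1)) (\<lambda>w. qr ^ (M - 1))
              + (\<Sum>i\<in>UNIV. replicate_mset (q - 1)
                   (\<lambda>w. if w = i then qr ^ (M - 1) * (1 + \<epsilon> * (qr - 1) * qr powr (- real r / 2))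
                        else qr ^ (M - 1) * (1 - \<epsilon> * qr powr (- real r / 2))))) \<and>
        (odd r \<longrightarrow>
           wdist C = {#0#}
              + replicate_mset (q - 1) (qr ^ M)
              + replicate_mset (q^2 * (q^m2 - 1) + (q - 1)) (qr ^ (M - 1) * (qr - 1))
              + replicate_mset ((q - 1)^2 div 2) (qr ^ (M - 1) * (qr - 1 - \<epsilon> * qr powr ((1 - real r) / 2)))
              + replicate_mset ((q - 1)^2 div 2) (qr ^ (M - 1) * (qr - 1 + \<epsilon> * qr powr ((1 - real r) / 2)))
         \<and> cwe C = (\<Sum>i\<in>UNIV. {# (\<lambda>w. if w = i then qr ^ M else 0) #})
              + replicate_mset (q^2 * (q^m2 - 1)) (\<lambda>w. qr ^ (M - 1))
              + (\<Sum>i\<in>UNIV. replicate_mset ((q - 1) div 2)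
                   (\<lambda>w. if w = i then qr ^ (M - 1)
                        else qr ^ (M - 1) * (1 + \<epsilon> * qr powr ((1 - real r) / 2) * real_of_int (qchar (i - w)))))
              + (\<Sum>i\<in>UNIV. replicate_mset ((q - 1) div 2)
                   (\<lambda>w. if w = i then qr ^ (M - 1)
                        else qr ^ (M - 1) * (1 - \<epsilon> * qr powr ((1 - real r) / 2) * real_of_int (qchar (i - w))))))"
proof -
  note assms = assms
  have p2: "p \<ge> 2" using assms(1) prime_ge_2_nat by blast
  have cardk: "CARD('k) = q" by (rule assms(5))
  have oddq: "odd CARD('k)" using assms(2,4,5) by simp
  have idemb: "field_emb (id :: 'k \<Rightarrow> 'k)" by (simp add: field_emb_def)
  have CHk: "CHAR('k) = p" using char_emb[OF idemb assms(1)] assms(4,5) by simp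
  have two: "(2::'k) \<noteq> 0"
  proof
    assume "(2::'k) = 0"
    hence "(of_nat 2 :: 'k) = 0" by simp
    hence "p dvd 2" using CHk by (simp only: of_nat_eq_0_iff_char_dvd)
    hence "p \<le> 2" by (simp add: dvd_imp_le)
    hence "p = 2" using p2 by simp
    thus False using assms(2) by simp
  qed
  define Tf where "Tf = tr e2 q m2"
  have hyp2: "field_emb e2" "prime p" "CARD('k) = q" "q = p ^ m" "CARD('b) = q ^ m2" "1 \<le> m2"
    using assms by auto
  have Tf_eq: "Tf y = T e2 q m2 y" for y unfolding Tf_def by (rule T_tr[OF hyp2])
  have T_add': "\<And>x y. Tf (x + y) = Tf x + Tf y" unfolding Tf_eq by (rule T_add[OF hyp2])
  have T_scale': "\<And>a y. Tf (e2 a * y) = a * Tf y" unfolding Tf_eq by (rule T_scale[OF hyp2])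
  have T_fib': "\<And>b c. b \<noteq> 0 \<Longrightarrow> card {y. Tf (b * y) = c} = q ^ (m2 - 1)" unfolding Tf_eq by (rule T_fiber[OF hyp2])
  have T_nz': "\<exists>y. Tf y \<noteq> 0" unfolding Tf_eq by (rule T_nonzero[OF hyp2])
  have Q0: "Q 0 = 0" by (rule Q_0[OF assms(10) assms(12) two])
  note H = assms(11) T_add' T_scale' T_fib' T_nz' Q0 assms(13) cardk assms(8) assms(9) assms(7)
  have Ceq: "codeQ e2 q m2 Q = range (\<lambda>(a, b, c). cw Tf Q a b c)"
  proof
    show "codeQ e2 q m2 Q \<subseteq> range (\<lambda>(a, b, c). cw Tf Q a b c)"
    proof
      fix f assume "f \<in> codeQ e2 q m2 Q"
      then obtain a b c where f: "f = (\<lambda>(x, y). a * Q x + tr e2 q m2 (b * y) + c)" unfolding codeQ_def by blast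
      show "f \<in> range (\<lambda>(a, b, c). cw Tf Q a b c)"
        by (rule image_eqI[where x="(a, b, c)"]) (simp_all add: f cw_def Tf_def)
    qed
    show "range (\<lambda>(a, b, c). cw Tf Q a b c) \<subseteq> codeQ e2 q m2 Q"
      unfolding codeQ_def cw_def Tf_def by auto
  qed
  have injF: "inj (\<lambda>(a, b, c). cw Tf Q a b c)" by (rule cw_inj[OF H])
  have cardC: "card (codeQ e2 q m2 Q) = CARD('k) ^ (m2 + 2)"
  proof -
    have "card (codeQ e2 q m2 Q) = CARD('k \<times> 'b \<times> 'k)" unfolding Ceq using card_image[OF injF] .
    also have "\<dots> = q * (q ^ m2 * q)" using assms(9) cardk by (simp only: card_prod)
    also have "\<dots> = CARD('k) ^ (m2 + 2)" unfolding cardk by (simp only: power_add power2_eq_square mult_ac)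
    finally show ?thesis .
  qed
  interpret VS: vector_space "\<lambda>(a::'k) (f::'a \<times> 'b \<Rightarrow> 'k) z. a * f z"
    by unfold_locales (simp_all add: fun_eq_iff distrib_left distrib_right mult.assoc)
  have sub: "VS.subspace (codeQ e2 q m2 Q)"
    unfolding VS.subspace_def Ceq
  proof (intro conjI ballI allI)
    show "0 \<in> range (\<lambda>(a, b, c). cw Tf Q a b c)"
    proof (rule image_eqI[where x="(0, 0, 0)"])
      show "0 = (\<lambda>(a, b, c). cw Tf Q a b c) (0, 0, 0)" using cw_zero[OF H] by (simp add: zero_fun_def)
    qed simp
  next
    fix x y assume "x \<in> range (\<lambda>(a, b, c). cw Tf Q a b c)" "y \<in> range (\<lambda>(a, b, c). cw Tf Q a b c)"
    then obtain a b c a' b' c' where xy: "x = cw Tf Q a b c" "y = cw Tf Q a' b' c'" by auto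
    have "x + y = cw Tf Q (a + a') (b + b') (c + c')"
      using cw_add[OF H, of a b c a' b' c'] xy by (simp add: plus_fun_def)
    thus "x + y \<in> range (\<lambda>(a, b, c). cw Tf Q a b c)" by (intro image_eqI[where x="(a + a', b + b', c + c')"]) simp_all
  next
    fix k x assume "x \<in> range (\<lambda>(a, b, c). cw Tf Q a b c)"
    then obtain a b c where x: "x = cw Tf Q a b c" by auto
    have "(\<lambda>z. k * x z) = cw Tf Q (k * a) (e2 k * b) (k * c)" using cw_scale[OF H, of k a b c] x by simp
    thus "(\<lambda>z. k * x z) \<in> range (\<lambda>(a, b, c). cw Tf Q a b c)" by (intro image_eqI[where x="(k * a, e2 k * b, k * c)"]) simp_all
  qed
  have dimC: "VS.dim (codeQ e2 q m2 Q) = m2 + 2"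
    by (rule VS.dim_card_fin) (use sub cardC card_k_gt1[OF assms(10) assms(12) two] in auto)
  obtain lam where lam: "qf_rank e1 m1 Q \<le> m1" "\<forall>i<qf_rank e1 m1 Q. lam i \<noteq> 0"
     "qf_eps e1 m1 Q = qchar (\<Prod>i<qf_rank e1 m1 Q. lam i)"
     "\<forall>t. card {x. Q x = t} = CARD('k) ^ (m1 - qf_rank e1 m1 Q) * cnt lam (qf_rank e1 m1 Q) t"
    using count_Q[OF assms(10) assms(12) two, of m1] assms(8) cardk by blast
  define r where "r = qf_rank e1 m1 Q"
  define k where "k = r div 2"
  have lamr: "\<forall>i<r. lam i \<noteq> 0" using lam(2) r_def by simp
  have rm: "r \<le> m1" using lam(1) r_def by simp
  have Nt: "real (card {x. Q x = t}) = real q ^ (m1 - r) * real (cnt lam r t)" for t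
    using lam(4) cardk r_def by simp
  have DF: "(even r \<longrightarrow> evenF lam (r div 2)) \<and> (odd r \<longrightarrow> oddF lam (r div 2))"
    by (rule diag_formulas[OF two oddq lamr])
  have hhq: "hh TYPE('k) = (q - 1) div 2" using hh_def[OF two oddq] cardk by simp
  have e1: "qchar (-1::'k) = (-1) ^ ((q - 1) div 2)" using qchar_minus1[OF two oddq] hhq by simp
  have evenpart: "even r \<longrightarrow> (wdist (codeQ e2 q m2 Q) = {#0#}
              + replicate_mset (q - 1) (real q ^ (m1 + m2))
              + replicate_mset (q^2 * (q^m2 - 1)) (real q ^ (m1 + m2 - 1) * (real q - 1))
              + replicate_mset (q - 1) (real q ^ (m1 + m2 - 1) * (real q - 1) * (1 - real_of_int (sgn_eps p m e1 m1 Q) * real q powr (- real r / 2)))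
              + replicate_mset ((q - 1)^2) (real q ^ (m1 + m2 - 1) * (real q - 1 + real_of_int (sgn_eps p m e1 m1 Q) * real q powr (- real r / 2)))
         \<and> cwe (codeQ e2 q m2 Q) = (\<Sum>i\<in>UNIV. {# (\<lambda>w. if w = i then real q ^ (m1 + m2) else 0) #})
              + replicate_mset (q^2 * (q^m2 - 1)) (\<lambda>w. real q ^ (m1 + m2 - 1))
              + (\<Sum>i\<in>UNIV. replicate_mset (q - 1)
                   (\<lambda>w. if w = i then real q ^ (m1 + m2 - 1) * (1 + real_of_int (sgn_eps p m e1 m1 Q) * (real q - 1) * real q powr (- real r / 2))
                        else real q ^ (m1 + m2 - 1) * (1 - real_of_int (sgn_eps p m e1 m1 Q) * real q powr (- real r / 2)))))"
    (is "_ \<longrightarrow> ?G")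
  proof
    assume ev: "even r"
    hence rk: "r = 2 * k" unfolding k_def by simp
    have eF: "evenF lam k" using DF ev k_def by simp
    let ?E = "qchar ((-1::'k) ^ k * (\<Prod>i<2 * k. lam i))"
    have N: "real q * real (card {x. Q x = t}) =
              real q ^ (m1 - r) * (real q ^ (2 * k) + real_of_int ?E * real q ^ k * (if t = 0 then real q - 1 else -1))" for t
    proof -
      have "real q * real (cnt lam (2 * k) t) = real q ^ (2 * k) + real_of_int ?E * real q ^ k * (if t = 0 then real q - 1 else -1)"
        using eF unfolding evenF_def[OF two oddq] cardk by blast
      moreover have "real q * real (card {x. Q x = t}) = real q ^ (m1 - r) * (real q * real (cnt lam (2 * k) t))"
        unfolding Nt[of t] rk by (simp only: mult.left_commute)
      ultimately show ?thesis by simp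
    qed
    have sgn: "sgn_eps p m e1 m1 Q = ?E"
    proof -
      have "sgn_eps p m e1 m1 Q = qf_eps e1 m1 Q * (-1) ^ ((p - 1) * m * r div 4)"
        unfolding sgn_eps_def Let_def using ev r_def by simp
      also have "(-1::int) ^ ((p - 1) * m * r div 4) = qchar (-1::'k) ^ k"
        unfolding e1 rk assms(4) by (rule sign_parity[OF assms(2)])
      also have "qf_eps e1 m1 Q * qchar (-1::'k) ^ k = ?E"
        using lam(3) rk r_def by (simp add: qchar_mult[OF two oddq] qchar_pow[OF two oddq] mult.commute)
      finally show ?thesis .
    qed
    show ?G
      unfolding Ceq sgn using core_even[OF H two oddq rk rm N] .
  qed
  have oddpart: "odd r \<longrightarrow> (wdist (codeQ e2 q m2 Q) = {#0#}
              + replicate_mset (q - 1) (real q ^ (m1 + m2))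
              + replicate_mset (q^2 * (q^m2 - 1) + (q - 1)) (real q ^ (m1 + m2 - 1) * (real q - 1))
              + replicate_mset ((q - 1)^2 div 2) (real q ^ (m1 + m2 - 1) * (real q - 1 - real_of_int (sgn_eps p m e1 m1 Q) * real q powr ((1 - real r) / 2)))
              + replicate_mset ((q - 1)^2 div 2) (real q ^ (m1 + m2 - 1) * (real q - 1 + real_of_int (sgn_eps p m e1 m1 Q) * real q powr ((1 - real r) / 2)))
         \<and> cwe (codeQ e2 q m2 Q) = (\<Sum>i\<in>UNIV. {# (\<lambda>w. if w = i then real q ^ (m1 + m2) else 0) #})
              + replicate_mset (q^2 * (q^m2 - 1)) (\<lambda>w. real q ^ (m1 + m2 - 1))
              + (\<Sum>i\<in>UNIV. replicate_mset ((q - 1) div 2)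
                   (\<lambda>w. if w = i then real q ^ (m1 + m2 - 1)
                        else real q ^ (m1 + m2 - 1) * (1 + real_of_int (sgn_eps p m e1 m1 Q) * real q powr ((1 - real r) / 2) * real_of_int (qchar (i - w)))))
              + (\<Sum>i\<in>UNIV. replicate_mset ((q - 1) div 2)
                   (\<lambda>w. if w = i then real q ^ (m1 + m2 - 1)
                        else real q ^ (m1 + m2 - 1) * (1 - real_of_int (sgn_eps p m e1 m1 Q) * real q powr ((1 - real r) / 2) * real_of_int (qchar (i - w))))))"
    (is "_ \<longrightarrow> ?G")
  proof
    assume od: "odd r"
    hence rk: "r = 2 * k + 1" unfolding k_def by simp
    have oF: "oddF lam k" using DF od k_def by simp
    let ?F = "qchar ((-1::'k) ^ k * (\<Prod>i<2 * k + 1. lam i))"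
    have prodnz: "(\<Prod>i<r. lam i) \<noteq> 0" using lamr by simp
    have Fpm: "?F = 1 \<or> ?F = -1" using qchar_nz[of "(-1::'k) ^ k * (\<Prod>i<2 * k + 1. lam i)"] prodnz rk by simp
    have N: "real (card {x. Q x = t}) =
              real q ^ (m1 - r) * (real q ^ (2 * k) + real_of_int ?F * real q ^ k * real_of_int (qchar t))" for t
    proof -
      have "real (cnt lam (2 * k + 1) t) = real q ^ (2 * k) + real_of_int ?F * real q ^ k * real_of_int (qchar t)"
        using oF unfolding oddF_def[OF two oddq] cardk by blast
      thus ?thesis using Nt[of t] rk by simp
    qed
    have epm: "sgn_eps p m e1 m1 Q = 1 \<or> sgn_eps p m e1 m1 Q = -1"
    proof -
      have "qf_eps e1 m1 Q = 1 \<or> qf_eps e1 m1 Q = -1" using lam(3) qchar_nz[of "\<Prod>i<r. lam i"] prodnz r_def by simp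
      moreover have "sgn_eps p m e1 m1 Q = qf_eps e1 m1 Q * (-1) ^ ((p - 1) * m * (r + 1) div 4)"
        unfolding sgn_eps_def Let_def using od r_def by simp
      ultimately show ?thesis by (auto simp: minus_one_power_iff)
    qed
    show ?G
      unfolding Ceq using core_odd[OF H two oddq rk rm Fpm epm N] .
  qed
  show ?thesis
    unfolding Let_def r_def[symmetric]
    using evenpart oddpart dimC sub assms(8,9) by (simp add: power_add)
qed



end
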